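(* Let $p\ge1$, $n:=\lfloor p\rfloor$, let $V,U$ be Banach spaces, let $X:[0,T]\to V$ satisfy $\|X\|_{p\text{-var};[0,T]}<\infty$ (no continuity assumed), and let $F\in\mathcal C^{n+1}_b(V,U)$. Then: (1) The limit $$\int_0^TDF(X_t)\,d\mathbb X_t:=\mathrm{RRS}\text{-}\lim_\Pi\sum_{[t_i,t_{i+1}]\in\Pi}\sum_{k=1}^n\frac1{k!}D^kF(X_{t_i})(X_{t_{i+1}}-X_{t_i})^{\otimes k}$$ exists, the series below converge absolutely (they have at most countably many nonzero terms), and $$F(X_T)-F(X_0)=\int_0^TDF(X_t)\,d\mathbb X_t+\sum_{0<t\le T}\Big(F(X_t)-F(X_{t-})-\sum_{k=1}^n\frac1{k!}D^kF(X_{t-})(\Delta^-_tX)^{\otimes k}\Big)+\sum_{0\le t<T}\Big(F(X_{t+})-F(X_t)-\sum_{k=1}^n\frac1{k!}D^kF(X_t)(\Delta^+_tX)^{\otimes k}\Big).$$ (2) If $X$ is càdlàg (right-continuous with left limits), then $$F(X_T)-F(X_0)=\int_0^TDF(X_t)\,d\mathbb X_t+\sum_{0<t\le T}\Big(F(X_t)-F(X_{t-})-\sum_{k=1}^n\frac1{k!}D^kF(X_{t-})(\Delta^-_tX)^{\otimes k}\Big).$$ (3) If $X$ is continuous, then $F(X_T)-F(X_0)=\int_0^TDF(X_t)\,d\mathbb X_t$.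
   Context: Tensor powers carry norms with $\|a\otimes b\|=\|a\|\|b\|$ (e.g. $V$ finite-dimensional). $\|X\|_{p\text{-var};[0,T]}:=(\sup_\Pi\sum_{[t_i,t_{i+1}]\in\Pi}\|X_{t_{i+1}}-X_{t_i}\|^p)^{1/p}$ over partitions $\Pi=\{0=t_0<\dots<t_N=T\}$ of $[0,T]$. A path of finite $p$-variation has left and right limits everywhere; $X_{t-}:=\lim_{u\uparrow t}X_u$, $X_{t+}:=\lim_{u\downarrow t}X_u$, $\Delta^-_tX:=X_t-X_{t-}$, $\Delta^+_tX:=X_{t+}-X_t$. $\mathcal C^k_b(V,U)$ is the set of $k$ times continuously differentiable $F:V\to U$ with $\|D^jF\|_\infty<\infty$ for $j=0,\dots,k$, where $D^jF(x)$ is a bounded symmetric $j$-linear map applied to $h^{\otimes j}$. RRS convergence: sums $S(\Pi)$ converge to $K$ in the refinement Riemann–Stieltjes sense if for every $\varepsilon>0$ there is a partition $\Pi_\varepsilon$ such that $\|S(\Pi)-K\|<\varepsilon$ for every partition $\Pi\supset\Pi_\varepsilon$. *)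

theory Defs
  imports "HOL-Analysis.Analysis"
begin

text \<open>Multilinear maps are represented as functions on lists of arguments:
  M :: 'v list => 'u, meant to be applied to lists of length k.\<close>

definition multilinear_on :: "nat \<Rightarrow> ('v::real_normed_vector list \<Rightarrow> 'u::real_normed_vector) \<Rightarrow> bool" where
  "multilinear_on k M \<longleftrightarrow>
     (\<forall>vs i. length vs = k \<longrightarrow> i < k \<longrightarrow> linear (\<lambda>h. M (vs[i := h])))"

definition symmetric_on :: "nat \<Rightarrow> ('v list \<Rightarrow> 'u) \<Rightarrow> bool" where
  "symmetric_on k M \<longleftrightarrow>
     (\<forall>vs i j. length vs = k \<longrightarrow> i < k \<longrightarrow> j < k \<longrightarrow> M (vs[i := vs ! j, j := vs ! i]) = M vs)"

definition bounded_ml :: "nat \<Rightarrow> ('v::real_normed_vector list \<Rightarrow> 'u::real_normed_vector) \<Rightarrow> bool" where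
  "bounded_ml k M \<longleftrightarrow>
     (\<exists>C. \<forall>vs. length vs = k \<longrightarrow> norm (M vs) \<le> C * prod_list (map norm vs))"

text \<open>F is in C^k_b(V,U), with D j x the j-th Frechet derivative D^jF(x) (a bounded symmetric
  j-linear map). Differentiability and continuity are with respect to the operator norm of
  j-linear maps, written out explicitly.\<close>

definition Ckb :: "nat \<Rightarrow> ('v::real_normed_vector \<Rightarrow> 'u::real_normed_vector) \<Rightarrow> (nat \<Rightarrow> 'v \<Rightarrow> 'v list \<Rightarrow> 'u) \<Rightarrow> bool" where
  "Ckb k F D \<longleftrightarrow>
     (\<forall>x. D 0 x [] = F x) \<and>
     (\<forall>j\<le>k. \<forall>x. multilinear_on j (D j x) \<and> symmetric_on j (D j x) \<and> bounded_ml j (D j x)) \<and>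
     (\<forall>j<k. \<forall>x. \<forall>e>0. \<exists>d>0. \<forall>h. norm h < d \<longrightarrow> (\<forall>vs. length vs = j \<longrightarrow>
        norm (D j (x + h) vs - D j x vs - D (Suc j) x (h # vs)) \<le> e * norm h * prod_list (map norm vs))) \<and>
     (\<forall>j\<le>k. \<forall>x. \<forall>e>0. \<exists>d>0. \<forall>y. dist y x < d \<longrightarrow> (\<forall>vs. length vs = j \<longrightarrow>
        norm (D j y vs - D j x vs) \<le> e * prod_list (map norm vs))) \<and>
     (\<forall>j\<le>k. \<exists>C. \<forall>x vs. length vs = j \<longrightarrow> norm (D j x vs) \<le> C * prod_list (map norm vs))"

definition is_partition :: "real \<Rightarrow> real set \<Rightarrow> bool" where
  "is_partition T P \<longleftrightarrow> finite P \<and> P \<subseteq> {0..T} \<and> 0 \<in> P \<and> T \<in> P"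

definition pnext :: "real set \<Rightarrow> real \<Rightarrow> real" where
  "pnext P t = Min {s \<in> P. t < s}"

definition psum :: "real \<Rightarrow> real set \<Rightarrow> (real \<Rightarrow> real \<Rightarrow> 'a::comm_monoid_add) \<Rightarrow> 'a" where
  "psum T P f = (\<Sum>t\<in>P - {T}. f t (pnext P t))"

definition finite_pvar :: "real \<Rightarrow> real \<Rightarrow> (real \<Rightarrow> 'v::real_normed_vector) \<Rightarrow> bool" where
  "finite_pvar p T X \<longleftrightarrow>
     (\<exists>C. \<forall>P. is_partition T P \<longrightarrow> psum T P (\<lambda>s t. norm (X t - X s) powr p) \<le> C)"

definition rrs_lim :: "real \<Rightarrow> (real set \<Rightarrow> 'a::real_normed_vector) \<Rightarrow> 'a \<Rightarrow> bool" where
  "rrs_lim T S K \<longleftrightarrow>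
     (\<forall>e>0. \<exists>Pe. is_partition T Pe \<and>
        (\<forall>P. is_partition T P \<and> Pe \<subseteq> P \<longrightarrow> norm (S P - K) < e))"

definition rrs_integral :: "real \<Rightarrow> (real set \<Rightarrow> 'a::real_normed_vector) \<Rightarrow> 'a" where
  "rrs_integral T S = (THE K. rrs_lim T S K)"

definition taylor :: "(nat \<Rightarrow> 'v \<Rightarrow> 'v list \<Rightarrow> 'u::real_vector) \<Rightarrow> nat \<Rightarrow> 'v \<Rightarrow> 'v \<Rightarrow> 'u" where
  "taylor D n x h = (\<Sum>k=1..n. (1 / fact k) *\<^sub>R D k x (replicate k h))"

definition rough_sum :: "(nat \<Rightarrow> 'v::real_normed_vector \<Rightarrow> 'v list \<Rightarrow> 'u::real_vector) \<Rightarrow> nat \<Rightarrow> real \<Rightarrow> (real \<Rightarrow> 'v) \<Rightarrow> real set \<Rightarrow> 'u" where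
  "rough_sum D n T X P = psum T P (\<lambda>s t. taylor D n (X s) (X t - X s))"

definition lleft :: "(real \<Rightarrow> 'v::real_normed_vector) \<Rightarrow> real \<Rightarrow> 'v" where
  "lleft X t = Lim (at_left t) X"

definition lright :: "(real \<Rightarrow> 'v::real_normed_vector) \<Rightarrow> real \<Rightarrow> 'v" where
  "lright X t = Lim (at_right t) X"

definition jump_left :: "('v \<Rightarrow> 'u::real_normed_vector) \<Rightarrow> (nat \<Rightarrow> 'v \<Rightarrow> 'v list \<Rightarrow> 'u) \<Rightarrow> nat \<Rightarrow> (real \<Rightarrow> 'v::real_normed_vector) \<Rightarrow> real \<Rightarrow> 'u" where
  "jump_left F D n X t = F (X t) - F (lleft X t) - taylor D n (lleft X t) (X t - lleft X t)"

definition jump_right :: "('v \<Rightarrow> 'u::real_normed_vector) \<Rightarrow> (nat \<Rightarrow> 'v \<Rightarrow> 'v list \<Rightarrow> 'u) \<Rightarrow> nat \<Rightarrow> (real \<Rightarrow> 'v::real_normed_vector) \<Rightarrow> real \<Rightarrow> 'u" where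
  "jump_right F D n X t = F (lright X t) - F (X t) - taylor D n (X t) (lright X t - X t)"

definition cadlag_on :: "real \<Rightarrow> (real \<Rightarrow> 'v::topological_space) \<Rightarrow> bool" where
  "cadlag_on T X \<longleftrightarrow> (\<forall>t\<in>{0..<T}. (X \<longlongrightarrow> X t) (at_right t)) \<and>
                      (\<forall>t\<in>{0<..T}. \<exists>l. (X \<longlongrightarrow> l) (at_left t))"

end

theory Submission
  imports Defs
begin

lemma pnext_props:
  fixes S :: "real set"
  assumes "finite S" "u \<in> S" "s < u"
  shows "pnext S s \<in> S" "s < pnext S s" "\<And>v. v \<in> S \<Longrightarrow> s < v \<Longrightarrow> pnext S s \<le> v"
proof -
  have fin: "finite {v \<in> S. s < v}" using assms by auto
  have ne: "{v \<in> S. s < v} \<noteq> {}" using assms by auto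
  have "pnext S s \<in> {v \<in> S. s < v}" unfolding pnext_def using Min_in[OF fin ne] .
  then show "pnext S s \<in> S" "s < pnext S s" by auto
  show "\<And>v. v \<in> S \<Longrightarrow> s < v \<Longrightarrow> pnext S s \<le> v" unfolding pnext_def using fin by auto
qed

lemma pnext_eqI:
  fixes S :: "real set"
  assumes "finite S" "t \<in> S" "s < t" "\<And>v. v \<in> S \<Longrightarrow> s < v \<Longrightarrow> t \<le> v"
  shows "pnext S s = t"
  using pnext_props[OF assms(1-3)] assms by (meson antisym)

lemma pnext_between:
  fixes S :: "real set"
  assumes "finite S" "u \<in> S" "s < u" "v \<in> S" "s < v" "v < pnext S s"
  shows False
  using pnext_props(3)[OF assms(1-3) assms(4,5)] assms(6) by simp

lemma pnext_mono:
  fixes S :: "real set"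
  assumes "finite S" "u \<in> S" "s' < u" "s \<in> S" "s < s'" "s' \<in> S"
  shows "pnext S s \<le> s'" "pnext S s < pnext S s'"
proof -
  show 1: "pnext S s \<le> s'" using pnext_props(3)[of S s' s s'] assms by auto
  show "pnext S s < pnext S s'" using 1 pnext_props(2)[OF assms(1-3)] by linarith
qed

lemma telescope_Max:
  fixes S :: "real set" and g :: "real \<Rightarrow> 'a::ab_group_add"
  assumes "finite S" "S \<noteq> {}"
  shows "(\<Sum>s\<in>S - {Max S}. g (pnext S s) - g s) = g (Max S) - g (Min S)"
  using assms
proof (induction S rule: finite_linorder_max_induct)
  case empty
  then show ?case by simp
next
  case (insert b A)
  show ?case
  proof (cases "A = {}")
    case True
    then show ?thesis by simp
  next
    case False
    have mx: "Max (insert b A) = b" using insert by (simp add: Max_insert2 less_imp_le)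
    have mn: "Min (insert b A) = Min A" using insert False
      by (metis Min.insert Min_in less_imp_le min.absorb2 order.strict_iff_not)
    have MA: "Max A \<in> A" using False insert by simp
    have MAb: "Max A < b" using MA insert by simp
    have bA: "b \<notin> A" using insert by auto
    have eq: "insert b A - {b} = insert (Max A) (A - {Max A})" using MA bA by auto
    have pn1: "pnext (insert b A) (Max A) = b"
      apply (rule pnext_eqI) using insert MAb apply auto
      using Max_ge insert.hyps(1) not_le by blast
    have pn2: "pnext (insert b A) s = pnext A s" if "s \<in> A - {Max A}" for s
    proof -
      have sM: "s < Max A" using that insert(1) by (simp add: order_less_le)
      show ?thesis
        apply (rule pnext_eqI)
        using pnext_props[OF insert(1) MA sM] sM MAb insert by (auto simp: less_imp_le)
    qed
    have "(\<Sum>s\<in>insert b A - {Max (insert b A)}. g (pnext (insert b A) s) - g s)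
        = (g b - g (Max A)) + (\<Sum>s\<in>A - {Max A}. g (pnext (insert b A) s) - g s)"
      unfolding mx eq using insert(1) pn1 by (subst sum.insert) auto
    also have "(\<Sum>s\<in>A - {Max A}. g (pnext (insert b A) s) - g s) = (\<Sum>s\<in>A - {Max A}. g (pnext A s) - g s)"
      using pn2 by (intro sum.cong) auto
    also have "\<dots> = g (Max A) - g (Min A)" using insert False by simp
    finally show ?thesis unfolding mx mn by simp
  qed
qed

lemma partition_MaxMin:
  assumes "is_partition T P"
  shows "Max P = T" "Min P = 0" "finite P"
  using assms unfolding is_partition_def
  by (auto intro!: Max_eqI Min_eqI)

lemma psum_telescope:
  assumes "is_partition T P"
  shows "psum T P (\<lambda>s t. g t - g s) = g T - (g 0 :: 'a::ab_group_add)"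
proof -
  have "P \<noteq> {}" using assms unfolding is_partition_def by auto
  then show ?thesis using telescope_Max[of P g] partition_MaxMin[OF assms] unfolding psum_def by simp
qed

lemma partition_next:
  assumes "is_partition T P" "s \<in> P - {T}"
  shows "pnext P s \<in> P" "s < pnext P s" "\<And>v. v \<in> P \<Longrightarrow> s < v \<Longrightarrow> pnext P s \<le> v"
    "0 \<le> s" "pnext P s \<le> T"
proof -
  have f: "finite P" "T \<in> P" "s < T" "s \<ge> 0" using assms unfolding is_partition_def by auto
  show "pnext P s \<in> P" "s < pnext P s" "\<And>v. v \<in> P \<Longrightarrow> s < v \<Longrightarrow> pnext P s \<le> v"
    using pnext_props[OF f(1,2,3)] by auto
  show "0 \<le> s" by fact
  show "pnext P s \<le> T" using pnext_props(3)[OF f(1,2,3) f(2,3)] .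
qed

lemma partition_prev:
  assumes "is_partition T P" "a \<in> P" "0 < a"
  shows "\<exists>s\<in>P - {T}. s < a \<and> pnext P s = a"
proof -
  have f: "finite P" "0 \<in> P" "P \<subseteq> {0..T}" using assms unfolding is_partition_def by auto
  define s where "s = Max {u \<in> P. u < a}"
  have fin: "finite {u \<in> P. u < a}" "{u \<in> P. u < a} \<noteq> {}" using f assms by auto
  have sin: "s \<in> {u \<in> P. u < a}" unfolding s_def using Max_in[OF fin] .
  have "s < T" using sin assms f by auto
  moreover have "pnext P s = a"
  proof (rule pnext_eqI[OF f(1) assms(2)])
    show "s < a" using sin by auto
    fix v assume "v \<in> P" "s < v"
    then show "a \<le> v" using Max_ge[OF fin(1), of v] unfolding s_def[symmetric] by force
  qed
  ultimately show ?thesis using sin by auto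
qed

lemma pnext_inj:
  assumes "is_partition T P"
  shows "inj_on (pnext P) (P - {T})"
proof (rule inj_onI)
  fix s s' assume a: "s \<in> P - {T}" "s' \<in> P - {T}" "pnext P s = pnext P s'"
  show "s = s'"
  proof (rule ccontr)
    assume "s \<noteq> s'"
    then consider "s < s'" | "s' < s" by linarith
    then show False
    proof cases
      case 1
      have "pnext P s \<le> s'" using partition_next(3)[OF assms a(1), of s'] a 1 by auto
      then show False using partition_next(2)[OF assms a(2)] a(3) by simp
    next
      case 2
      have "pnext P s' \<le> s" using partition_next(3)[OF assms a(2), of s] a 2 by auto
      then show False using partition_next(2)[OF assms a(1)] a(3) by simp
    qed
  qed
qed

lemma ml_lin:
  assumes "multilinear_on k M" "length vs = k" "i < k"
  shows "linear (\<lambda>h. M (vs[i := h]))"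
  using assms unfolding multilinear_on_def by auto

lemma ml_diff:
  assumes "multilinear_on k M" "length vs = k" "i < k"
  shows "M (vs[i := a]) - M (vs[i := b]) = M (vs[i := a - b])"
  using linear_diff[OF ml_lin[OF assms], of a b] by simp

lemma ml_scale:
  assumes "multilinear_on k M" "length vs = k" "i < k"
  shows "M (vs[i := c *\<^sub>R a]) = c *\<^sub>R M (vs[i := a])"
  using linear_scale[OF ml_lin[OF assms], of c a] by simp

lemma ml_zero:
  assumes "multilinear_on k M" "length vs = k" "i < k"
  shows "M (vs[i := 0]) = 0"
  using linear_0[OF ml_lin[OF assms]] by simp

lemma ml_rep_diff:
  fixes M :: "'v::real_normed_vector list \<Rightarrow> 'u::real_normed_vector"
  assumes ml: "multilinear_on k M"
    and bd: "\<And>vs. length vs = k \<Longrightarrow> norm (M vs) \<le> C * prod_list (map norm vs)"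
    and C: "C \<ge> 0" and v: "norm v \<le> B" and w: "norm w \<le> B"
  shows "norm (M (replicate k w) - M (replicate k v)) \<le> real k * (C * B^(k-1) * norm (w - v))"
proof -
  define U where "U i x = replicate i w @ x # replicate (k - Suc i) v" for i x
  define L where "L i = replicate i w @ replicate (k - i) v" for i
  have B0: "B \<ge> 0" using v norm_ge_zero order_trans by blast
  have "M (replicate k w) - M (replicate k v) = (\<Sum>i<k. M (L (Suc i)) - M (L i))"
    by (subst sum_lessThan_telescope) (simp add: L_def)
  also have "\<dots> = (\<Sum>i<k. M (U i (w - v)))"
  proof (intro sum.cong refl)
    fix i assume i: "i \<in> {..<k}"
    have kk: "k - i = Suc (k - Suc i)" using i by auto
    have LS: "L (Suc i) = U i w" unfolding L_def U_def by (simp add: replicate_append_same[symmetric])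
    have LI: "L i = U i v" unfolding L_def U_def kk by simp
    have len: "length (U i v) = k" using i unfolding U_def by auto
    have upd: "(U i v)[i := x] = U i x" for x unfolding U_def by (simp add: list_update_append)
    show "M (L (Suc i)) - M (L i) = M (U i (w - v))"
      using ml_diff[OF ml len, of i w v] i upd LS LI by simp
  qed
  also have "norm \<dots> \<le> (\<Sum>i<k. norm (M (U i (w - v))))" by (rule norm_sum)
  also have "\<dots> \<le> (\<Sum>i<k. C * B^(k-1) * norm (w - v))"
  proof (intro sum_mono)
    fix i assume i: "i \<in> {..<k}"
    have len: "length (U i (w-v)) = k" using i unfolding U_def by auto
    have "prod_list (map norm (U i (w - v))) = norm w ^ i * (norm (w - v) * norm v ^ (k - Suc i))"
      unfolding U_def by simp
    also have "\<dots> \<le> B ^ i * (norm (w - v) * B ^ (k - Suc i))"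
      by (intro mult_mono power_mono v w mult_left_mono) (auto simp: B0)
    also have "\<dots> = B^(k-1) * norm (w - v)"
      using i by (simp add: power_add[symmetric] algebra_simps)
    finally have "prod_list (map norm (U i (w - v))) \<le> B^(k-1) * norm (w - v)" .
    then have "C * prod_list (map norm (U i (w - v))) \<le> C * (B^(k-1) * norm (w - v))"
      using C by (rule mult_left_mono)
    then show "norm (M (U i (w - v))) \<le> C * B^(k-1) * norm (w - v)"
      using bd[OF len] by (simp add: mult.assoc)
  qed
  also have "\<dots> = real k * (C * B^(k-1) * norm (w - v))" by simp
  finally show ?thesis .
qed

lemma Ckb_F: assumes "Ckb N F D" shows "D 0 x [] = F x"
proof -
  have "\<forall>x. D 0 x [] = F x" using assms[unfolded Ckb_def] by (rule conjunct1)
  then show ?thesis by blast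
qed

lemma Ckb_ml: assumes "Ckb N F D" "j \<le> N" shows "multilinear_on j (D j x)"
proof -
  have "\<forall>j\<le>N. \<forall>x. multilinear_on j (D j x) \<and> symmetric_on j (D j x) \<and> bounded_ml j (D j x)"
    using assms(1)[unfolded Ckb_def] by (rule conjunct1[OF conjunct2])
  then show ?thesis using assms(2) by blast
qed

lemma prod_norm_nonneg: "0 \<le> prod_list (map norm (vs :: 'a::real_normed_vector list))"
  by (induction vs) auto

lemma Ckb_bound:
  assumes "Ckb N F D" "j \<le> N"
  shows "\<exists>C\<ge>0. \<forall>x vs. length vs = j \<longrightarrow> norm (D j x vs) \<le> C * prod_list (map norm vs)"
proof -
  obtain C where C: "\<forall>x vs. length vs = j \<longrightarrow> norm (D j x vs) \<le> C * prod_list (map norm vs)"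
    using assms(1)[unfolded Ckb_def, THEN conjunct2, THEN conjunct2, THEN conjunct2, THEN conjunct2] assms(2) by blast
  have "C * prod_list (map norm vs) \<le> max C 0 * prod_list (map norm vs)" for vs :: "'a list"
    by (intro mult_right_mono) (auto simp: prod_norm_nonneg)
  then show ?thesis using C by (intro exI[of _ "max C 0"]) (auto intro: order_trans)
qed

lemma Ckb_cont:
  assumes "Ckb N F D" "j \<le> N" "e > 0"
  shows "\<exists>d>0. \<forall>y. dist y x < d \<longrightarrow> (\<forall>vs. length vs = j \<longrightarrow> norm (D j y vs - D j x vs) \<le> e * prod_list (map norm vs))"
  using assms(1)[unfolded Ckb_def, THEN conjunct2, THEN conjunct2, THEN conjunct2, THEN conjunct1] assms(2,3) by blast

lemma Ckb_der:
  assumes "Ckb N F D" "j < N" "e > 0"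
  shows "\<exists>d>0. \<forall>h. norm h < d \<longrightarrow> (\<forall>vs. length vs = j \<longrightarrow>
        norm (D j (x + h) vs - D j x vs - D (Suc j) x (h # vs)) \<le> e * norm h * prod_list (map norm vs))"
  using assms(1)[unfolded Ckb_def, THEN conjunct2, THEN conjunct2, THEN conjunct1] assms(2,3) by blast

lemma Dtend:
  fixes D :: "nat \<Rightarrow> 'v::real_normed_vector \<Rightarrow> 'v list \<Rightarrow> 'u::real_normed_vector"
  assumes ck: "Ckb N F D" and kN: "k \<le> N" and f: "(f \<longlongrightarrow> x0) Fl" and g: "(g \<longlongrightarrow> h0) Fl"
  shows "((\<lambda>t. D k (f t) (replicate k (g t))) \<longlongrightarrow> D k x0 (replicate k h0)) Fl"
proof (rule tendstoI)
  fix e :: real assume e: "e > 0"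
  obtain C where C: "C \<ge> 0" "\<And>x vs. length vs = k \<Longrightarrow> norm (D k x vs) \<le> C * prod_list (map norm vs)"
    using Ckb_bound[OF ck kN] by blast
  define B where "B = norm h0 + 1"
  define K where "K = real k * C * B^(k-1)"
  have K0: "K \<ge> 0" unfolding K_def B_def using C by auto
  define e1 where "e1 = e / (2 * (K + 1))"
  have e1: "e1 > 0" unfolding e1_def using e K0 by auto
  define e2 where "e2 = e / (2 * (norm h0 ^ k + 1))"
  have e2: "e2 > 0" unfolding e2_def using e by (intro divide_pos_pos) (auto intro: add_nonneg_pos)
  obtain d where d: "d > 0" "\<And>y vs. dist y x0 < d \<Longrightarrow> length vs = k \<Longrightarrow> norm (D k y vs - D k x0 vs) \<le> e2 * prod_list (map norm vs)"
    using Ckb_cont[OF ck kN e2, of x0] by blast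
  have ev1: "eventually (\<lambda>t. dist (g t) h0 < min 1 e1) Fl" using tendstoD[OF g, of "min 1 e1"] e1 by simp
  have ev2: "eventually (\<lambda>t. dist (f t) x0 < d) Fl" using tendstoD[OF f d(1)] .
  show "eventually (\<lambda>t. dist (D k (f t) (replicate k (g t))) (D k x0 (replicate k h0)) < e) Fl"
    using ev1 ev2
  proof eventually_elim
    case (elim t)
    have ng: "norm (g t) \<le> B" unfolding B_def using elim norm_triangle_sub[of "g t" h0]
      by (auto simp: dist_norm)
    have nh: "norm h0 \<le> B" unfolding B_def by simp
    have "norm (D k (f t) (replicate k (g t)) - D k (f t) (replicate k h0)) \<le> real k * (C * B^(k-1) * norm (g t - h0))"
      by (rule ml_rep_diff[OF Ckb_ml[OF ck kN] C(2) C(1) nh ng]) auto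
    also have "\<dots> = K * norm (g t - h0)" unfolding K_def by simp
    also have "\<dots> \<le> K * e1" using elim K0 by (intro mult_left_mono) (auto simp: dist_norm)
    also have "\<dots> < e / 2" unfolding e1_def using e K0 by (simp add: field_simps)
    finally have a1: "norm (D k (f t) (replicate k (g t)) - D k (f t) (replicate k h0)) < e / 2" .
    have "norm (D k (f t) (replicate k h0) - D k x0 (replicate k h0)) \<le> e2 * norm h0 ^ k"
      using d(2)[OF elim(2), of "replicate k h0"] by (simp add: prod_list_replicate)
    also have "\<dots> = (e / 2) * (norm h0 ^ k / (norm h0 ^ k + 1))" unfolding e2_def by (simp add: field_simps)
    also have "\<dots> < (e / 2) * 1" using e by (intro mult_strict_left_mono) (auto simp: divide_less_eq add_pos_nonneg, smt (verit) norm_ge_zero zero_le_power)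
    also have "\<dots> = e / 2" by simp
    finally have a2: "norm (D k (f t) (replicate k h0) - D k x0 (replicate k h0)) < e / 2" .
    have "norm (D k (f t) (replicate k (g t)) - D k x0 (replicate k h0)) \<le>
      norm (D k (f t) (replicate k (g t)) - D k (f t) (replicate k h0)) + norm (D k (f t) (replicate k h0) - D k x0 (replicate k h0))"
      by (rule norm_diff_triangle_le) (rule order_refl)+
    then show ?case unfolding dist_norm using a1 a2 by simp
  qed
qed

lemma sum_zero_pow_scale:
  fixes c :: "nat \<Rightarrow> 'u::real_normed_vector"
  shows "(\<Sum>i\<le>m. ((0::real)^i / fact i) *\<^sub>R c i) = c 0"
  by (induction m) auto

lemma TAY:
  fixes g :: "nat \<Rightarrow> real \<Rightarrow> 'u::real_normed_vector"
  assumes "\<And>i x. i \<le> m \<Longrightarrow> x \<in> {0..1} \<Longrightarrow> (g i has_vector_derivative g (Suc i) x) (at x within {0..1})"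
    and "\<And>x. x \<in> {0..1} \<Longrightarrow> norm (g (Suc m) x) \<le> B"
    and "s \<in> {0..1}"
  shows "norm (g 0 s - (\<Sum>i\<le>m. (s^i / fact i) *\<^sub>R g i 0)) \<le> 3^(Suc m) * B * s^(Suc m)"
  using assms
proof (induction m arbitrary: g s)
  case 0
  have "norm (g (Suc 0) 0) \<le> B" using 0(2)[of 0] by simp
  then have B0: "B \<ge> 0" by (rule order_trans[OF norm_ge_zero])
  have s: "0 \<le> s" "s \<le> 1" using 0(3) by auto
  have t1: "norm (g 0 s - g 0 0 - (s - 0) *\<^sub>R g (Suc 0) 0) \<le> norm (s - 0) * (2 * B)"
  proof (rule vector_differentiable_bound_linearization[where S="{0..s}"])
    fix x assume x: "x \<in> {0..s}"
    show "(g 0 has_vector_derivative g (Suc 0) x) (at x within {0..s})"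
      using 0(1)[of 0 x] x s by (auto intro: has_vector_derivative_within_subset)
    have "norm (g (Suc 0) x - g (Suc 0) 0) \<le> norm (g (Suc 0) x) + norm (g (Suc 0) 0)" by (rule norm_triangle_ineq4)
    also have "\<dots> \<le> B + B" using 0(2)[of x] 0(2)[of 0] x s by (intro add_mono) auto
    finally show "norm (g (Suc 0) x - g (Suc 0) 0) \<le> 2 * B" by simp
  next
    show "closed_segment 0 s \<subseteq> {0..s}" using s by (simp add: closed_segment_eq_real_ivl)
    show "0 \<in> {0..s}" using s by simp
  qed
  have t2: "norm (s *\<^sub>R g (Suc 0) 0) \<le> s * B" using 0(2)[of 0] s by (simp add: mult_left_mono)
  have "norm (g 0 s - g 0 0) \<le> norm (g 0 s - g 0 0 - s *\<^sub>R g (Suc 0) 0) + norm (s *\<^sub>R g (Suc 0) 0)"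
    using norm_triangle_ineq[of "g 0 s - g 0 0 - s *\<^sub>R g (Suc 0) 0" "s *\<^sub>R g (Suc 0) 0"] by simp
  also have "\<dots> \<le> s * (2 * B) + s * B" using t1 t2 s by (intro add_mono) auto
  also have "\<dots> = 3 ^ Suc 0 * B * s ^ Suc 0" by (simp add: algebra_simps)
  finally have "norm (g 0 s - g 0 0) \<le> 3 ^ Suc 0 * B * s ^ Suc 0" .
  then show ?case by simp
next
  case (Suc m)
  have "norm (g (Suc (Suc m)) 0) \<le> B" using Suc(3)[of 0] by simp
  then have B0: "B \<ge> 0" by (rule order_trans[OF norm_ge_zero])
  have s: "0 \<le> s" "s \<le> 1" using Suc(4) by auto
  define psi where "psi x = g 0 x - (\<Sum>i\<le>Suc m. (x^i / fact i) *\<^sub>R g i 0)" for x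
  define psi' where "psi' x = g 1 x - (\<Sum>i\<le>m. (x^i / fact i) *\<^sub>R g (Suc i) 0)" for x
  have IH: "norm (psi' x) \<le> 3^(Suc m) * B * x^(Suc m)" if "x \<in> {0..1}" for x
    unfolding psi'_def using Suc.IH[of "\<lambda>i. g (Suc i)" x] Suc(2,3) that by auto
  have psi_alt: "psi x = g 0 x - g 0 0 - (\<Sum>j\<le>m. (x^(Suc j) / fact (Suc j)) *\<^sub>R g (Suc j) 0)" for x
    unfolding psi_def by (simp only: sum.atMost_Suc_shift power_0 fact_0 div_by_1 scaleR_one diff_diff_eq)
  have dpow: "((\<lambda>x::real. x^(Suc j) / fact (Suc j)) has_field_derivative (x^j / fact j)) (at x within S)" for j x S
  proof -
    have "((\<lambda>x::real. x^(Suc j) / fact (Suc j)) has_field_derivative (real (Suc j) * x^j / fact (Suc j))) (at x within S)"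
      using DERIV_cdivide[OF DERIV_pow[of "Suc j" x S], of "fact (Suc j)"] by simp
    moreover have "real (Suc j) * x^j / fact (Suc j) = x^j / fact j" by (simp add: divide_simps)
    ultimately show ?thesis by simp
  qed
  have dpsi: "(psi has_vector_derivative psi' x) (at x within {0..1})" if "x \<in> {0..1}" for x
  proof -
    have "((\<lambda>x. g 0 x - g 0 0 - (\<Sum>j\<le>m. (x^(Suc j) / fact (Suc j)) *\<^sub>R g (Suc j) 0)) has_vector_derivative
        (g 1 x - 0 - (\<Sum>j\<le>m. ((x^(Suc j) / fact (Suc j)) *\<^sub>R 0 + (x^j / fact j) *\<^sub>R g (Suc j) 0))))
        (at x within {0..1})"
      using Suc(2)[of 0 x] that
      by (intro has_vector_derivative_diff has_vector_derivative_sum has_vector_derivative_const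
            has_vector_derivative_scaleR dpow) auto
    then show ?thesis unfolding psi_alt[abs_def] psi'_def by simp
  qed
  have "norm (psi s - psi 0 - (s - 0) *\<^sub>R psi' 0) \<le> norm (s - 0) * (3^(Suc m) * B * s^(Suc m))"
  proof (rule vector_differentiable_bound_linearization[where S="{0..s}"])
    fix x assume x: "x \<in> {0..s}"
    show "(psi has_vector_derivative psi' x) (at x within {0..s})"
      using dpsi[of x] x s by (auto intro: has_vector_derivative_within_subset)
    have p0: "psi' 0 = 0" unfolding psi'_def using sum_zero_pow_scale[where m=m and c="\<lambda>i. g (Suc i) 0"] by simp
    have "norm (psi' x) \<le> 3^(Suc m) * B * x^(Suc m)" using IH[of x] x s by auto
    also have "\<dots> \<le> 3^(Suc m) * B * s^(Suc m)" using x B0 by (intro mult_left_mono power_mono) auto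
    finally show "norm (psi' x - psi' 0) \<le> 3^(Suc m) * B * s^(Suc m)" using p0 by simp
  next
    show "closed_segment 0 s \<subseteq> {0..s}" using s by (simp add: closed_segment_eq_real_ivl)
    show "0 \<in> {0..s}" using s by simp
  qed
  moreover have "psi 0 = 0" unfolding psi_def using sum_zero_pow_scale[where m="Suc m" and c="\<lambda>i. g i 0"] by simp
  moreover have "psi' 0 = 0" unfolding psi'_def using sum_zero_pow_scale[where m=m and c="\<lambda>i. g (Suc i) 0"] by simp
  ultimately have "norm (psi s) \<le> s * (3^(Suc m) * B * s^(Suc m))" using s by simp
  also have "\<dots> = 3^(Suc m) * B * s^(Suc (Suc m))" by simp
  also have "\<dots> \<le> 3^(Suc (Suc m)) * B * s^(Suc (Suc m))" using B0 s by (intro mult_right_mono) auto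
  finally show ?case unfolding psi_def .
qed

lemma frac_le1: "0 \<le> (a::real) \<Longrightarrow> a / (a + 1) \<le> 1"
  by (simp add: divide_le_eq)

lemma frac_less1: "0 \<le> (a::real) \<Longrightarrow> a / (a + 1) < 1"
  by (simp add: divide_less_eq)

lemma Dderiv:
  fixes D :: "nat \<Rightarrow> 'v::real_normed_vector \<Rightarrow> 'v list \<Rightarrow> 'u::real_normed_vector"
  assumes ck: "Ckb N F D" and i: "i < N"
  shows "((\<lambda>v. D i (x + v *\<^sub>R h) (replicate i h)) has_vector_derivative
           D (Suc i) (x + v *\<^sub>R h) (replicate (Suc i) h)) (at v)"
proof -
  define z where "z = x + v *\<^sub>R h"
  define G where "G = D (Suc i) z (replicate (Suc i) h)"
  have ml: "multilinear_on (Suc i) (D (Suc i) z)" using Ckb_ml[OF ck] i by simp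
  have lin1: "D (Suc i) z (c *\<^sub>R h # replicate i h) = c *\<^sub>R G" for c
    using ml_scale[OF ml, of "replicate (Suc i) h" 0 c h] by (simp add: G_def)
  have "((\<lambda>v. D i (x + v *\<^sub>R h) (replicate i h)) has_derivative (\<lambda>d. d *\<^sub>R G)) (at v)"
    unfolding has_derivative_at_alt
  proof (intro conjI allI impI)
    show "bounded_linear (\<lambda>d. d *\<^sub>R G)" by (rule bounded_linear_scaleR_left)
    fix e :: real assume e: "e > 0"
    define e' where "e' = e / (norm h ^ Suc i + 1)"
    have e': "e' > 0" unfolding e'_def using e by (intro divide_pos_pos) (auto intro: add_nonneg_pos)
    obtain d0 where d0: "d0 > 0" "\<And>k vs. norm k < d0 \<Longrightarrow> length vs = i \<Longrightarrow>
        norm (D i (z + k) vs - D i z vs - D (Suc i) z (k # vs)) \<le> e' * norm k * prod_list (map norm vs)"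
      using Ckb_der[OF ck i e', of z] by blast
    define d where "d = d0 / (norm h + 1)"
    have d: "d > 0" unfolding d_def using d0 by (intro divide_pos_pos) (auto intro: add_nonneg_pos)
    show "\<exists>d>0. \<forall>y. norm (y - v) < d \<longrightarrow>
       norm (D i (x + y *\<^sub>R h) (replicate i h) - D i (x + v *\<^sub>R h) (replicate i h) - (y - v) *\<^sub>R G) \<le> e * norm (y - v)"
    proof (intro exI[of _ d] conjI allI impI d)
      fix y assume y: "norm (y - v) < d"
      define k where "k = (y - v) *\<^sub>R h"
      have xk: "x + y *\<^sub>R h = z + k" unfolding z_def k_def by (simp add: algebra_simps)
      have nk: "norm k = norm (y - v) * norm h" unfolding k_def by simp
      have "norm (y - v) * norm h \<le> norm (y - v) * (norm h + 1)" by (intro mult_left_mono) auto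
      also have "\<dots> < d * (norm h + 1)" using y by (intro mult_strict_right_mono) (auto intro: add_nonneg_pos)
      also have "\<dots> = d0"
      proof -
        have hp: "norm h + 1 \<noteq> 0" by (smt (verit) norm_ge_zero)
        show ?thesis unfolding d_def using hp by simp
      qed
      finally have kd: "norm k < d0" using nk by simp
      have "norm (D i (z + k) (replicate i h) - D i z (replicate i h) - D (Suc i) z (k # replicate i h))
          \<le> e' * norm k * norm h ^ i"
        using d0(2)[OF kd, of "replicate i h"] by (simp add: prod_list_replicate)
      also have "\<dots> = norm (y - v) * (e' * norm h ^ Suc i)" using nk by (simp add: algebra_simps)
      also have "\<dots> \<le> norm (y - v) * e"
      proof (intro mult_left_mono)
        have "e' * norm h ^ Suc i = e * (norm h ^ Suc i / (norm h ^ Suc i + 1))"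
          unfolding e'_def by (simp add: field_simps)
        also have "\<dots> \<le> e * 1" using e by (intro mult_left_mono frac_le1) auto
        finally show "e' * norm h ^ Suc i \<le> e" by simp
      qed simp
      finally show "norm (D i (x + y *\<^sub>R h) (replicate i h) - D i (x + v *\<^sub>R h) (replicate i h) - (y - v) *\<^sub>R G) \<le> e * norm (y - v)"
        unfolding xk using lin1[of "y - v"] by (simp add: k_def z_def mult.commute)
    qed
  qed
  then show ?thesis unfolding has_vector_derivative_def G_def z_def .
qed

definition Rm :: "('v::real_vector \<Rightarrow> 'u::real_vector) \<Rightarrow> (nat \<Rightarrow> 'v \<Rightarrow> 'v list \<Rightarrow> 'u) \<Rightarrow> nat \<Rightarrow> 'v \<Rightarrow> 'v \<Rightarrow> 'u" where
  "Rm F D n x y = F y - F x - taylor D n x (y - x)"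

lemma sum_split0: "(\<Sum>i\<le>(n::nat). f i) = f 0 + (\<Sum>i=1..n. (f i :: 'a::comm_monoid_add))"
proof -
  have "{..n} = insert 0 {1..n}" by (auto simp: not_less_eq_eq)
  then show ?thesis by simp
qed

lemma Rm_bound:
  fixes D :: "nat \<Rightarrow> 'v::real_normed_vector \<Rightarrow> 'v list \<Rightarrow> 'u::real_normed_vector"
  assumes ck: "Ckb (Suc n) F D"
  shows "\<exists>K\<ge>0. \<forall>x y. norm (Rm F D n x y) \<le> K * norm (y - x)^(Suc n)"
proof -
  obtain C where C: "C \<ge> 0" "\<And>x vs. length vs = Suc n \<Longrightarrow> norm (D (Suc n) x vs) \<le> C * prod_list (map norm vs)"
    using Ckb_bound[OF ck, of "Suc n"] by blast
  have "norm (Rm F D n x y) \<le> (3^(Suc n) * C) * norm (y - x)^(Suc n)" for x y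
  proof -
    define h where "h = y - x"
    define g where "g i v = D i (x + v *\<^sub>R h) (replicate i h)" for i v
    have "norm (g 0 1 - (\<Sum>i\<le>n. (1^i / fact i) *\<^sub>R g i 0)) \<le> 3^(Suc n) * (C * norm h ^ Suc n) * 1^(Suc n)"
    proof (rule TAY)
      fix i v assume "i \<le> n" "v \<in> {0..(1::real)}"
      then show "(g i has_vector_derivative g (Suc i) v) (at v within {0..1})"
      proof -
        have "i < Suc n" using \<open>i \<le> n\<close> by simp
        from Dderiv[OF ck this, of x h v] show ?thesis unfolding g_def by (rule has_vector_derivative_at_within)
      qed
    next
      fix v :: real
      show "norm (g (Suc n) v) \<le> C * norm h ^ Suc n"
        unfolding g_def using C(2)[of "replicate (Suc n) h"] by (simp add: prod_list_replicate)
    qed simp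
    moreover have "g 0 1 = F y" unfolding g_def h_def using Ckb_F[OF ck, of y] by simp
    moreover have "(\<Sum>i\<le>n. (1^i / fact i) *\<^sub>R g i 0) = F x + taylor D n x h"
    proof -
      have "(\<Sum>i\<le>n. (1^i / fact i) *\<^sub>R g i 0) = (1^0 / fact 0) *\<^sub>R g 0 0 + (\<Sum>i=1..n. (1^i / fact i) *\<^sub>R g i 0)"
        by (rule sum_split0)
      also have "(1^0 / fact 0) *\<^sub>R g 0 0 = F x" unfolding g_def using Ckb_F[OF ck, of x] by simp
      also have "(\<Sum>i=1..n. (1^i / fact i) *\<^sub>R g i 0) = taylor D n x h"
        unfolding taylor_def g_def by simp
      finally show ?thesis .
    qed
    ultimately have "norm (F y - (F x + taylor D n x h)) \<le> 3^(Suc n) * (C * norm h ^ Suc n) * 1^(Suc n)"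
      by simp
    then show ?thesis unfolding Rm_def h_def[symmetric] by (simp add: diff_diff_eq mult.assoc)
  qed
  moreover have "3^(Suc n) * C \<ge> 0" using C by simp
  ultimately show ?thesis by blast
qed

lemma Rm_self:
  fixes D :: "nat \<Rightarrow> 'v::real_normed_vector \<Rightarrow> 'v list \<Rightarrow> 'u::real_normed_vector"
  assumes ck: "Ckb (Suc n) F D"
  shows "Rm F D n x x = 0"
proof -
  have "D k x (replicate k 0) = 0" if "k \<in> {1..n}" for k
  proof -
    have ml: "multilinear_on k (D k x)" using Ckb_ml[OF ck] that by simp
    show ?thesis using ml_zero[OF ml, of "replicate k 0" 0] that by (cases k) auto
  qed
  then show ?thesis unfolding Rm_def taylor_def by simp
qed

lemma Rm_tend:
  fixes D :: "nat \<Rightarrow> 'v::real_normed_vector \<Rightarrow> 'v list \<Rightarrow> 'u::real_normed_vector"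
  assumes ck: "Ckb (Suc n) F D" and f: "(f \<longlongrightarrow> x0) Fl" and g: "(g \<longlongrightarrow> y0) Fl"
  shows "((\<lambda>t. Rm F D n (f t) (g t)) \<longlongrightarrow> Rm F D n x0 y0) Fl"
proof -
  have FF: "F = (\<lambda>y. D 0 y (replicate 0 y))" using Ckb_F[OF ck] by auto
  have t1: "((\<lambda>t. F (g t)) \<longlongrightarrow> F y0) Fl" unfolding FF using Dtend[OF ck _ g g, of 0] by simp
  have t2: "((\<lambda>t. F (f t)) \<longlongrightarrow> F x0) Fl" unfolding FF using Dtend[OF ck _ f f, of 0] by simp
  have gf: "((\<lambda>t. g t - f t) \<longlongrightarrow> y0 - x0) Fl" using g f by (rule tendsto_diff)
  have t3: "((\<lambda>t. taylor D n (f t) (g t - f t)) \<longlongrightarrow> taylor D n x0 (y0 - x0)) Fl"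
    unfolding taylor_def
    by (intro tendsto_sum tendsto_scaleR tendsto_const Dtend[OF ck _ f gf]) auto
  show ?thesis unfolding Rm_def by (intro tendsto_diff t1 t2 t3)
qed

locale pvpath =
  fixes p T C :: real and X :: "real \<Rightarrow> 'v::banach"
  assumes p1: "p \<ge> 1" and T0: "0 < T"
    and PV: "\<And>P. is_partition T P \<Longrightarrow> psum T P (\<lambda>s t. norm (X t - X s) powr p) \<le> C"
begin

lemma pairs_bound:
  assumes fin: "finite I" and I1: "\<And>a b. (a,b) \<in> I \<Longrightarrow> 0 \<le> a \<and> a < b \<and> b \<le> T"
    and I2: "\<And>a b a' b'. (a,b) \<in> I \<Longrightarrow> (a',b') \<in> I \<Longrightarrow> (a,b) \<noteq> (a',b') \<Longrightarrow> b \<le> a' \<or> b' \<le> a"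
  shows "(\<Sum>(a,b)\<in>I. norm (X b - X a) powr p) \<le> C"
proof -
  define S where "S = {0,T} \<union> fst ` I \<union> snd ` I"
  have finS: "finite S" unfolding S_def using fin by auto
  have partS: "is_partition T S" unfolding is_partition_def S_def using fin I1 T0
    by (force simp: less_imp_le)
  have pn: "pnext S a = b" if ab: "(a,b) \<in> I" for a b
  proof (rule pnext_eqI[OF finS])
    show "b \<in> S" unfolding S_def using ab by force
    show "a < b" using I1[OF ab] by simp
    fix v assume v: "v \<in> S" "a < v"
    from v(1) consider "v = 0" | "v = T" | "v \<in> fst ` I" | "v \<in> snd ` I" unfolding S_def by blast
    then show "b \<le> v"
    proof cases
      case 1 then show ?thesis using v I1[OF ab] by simp
    next
      case 2 then show ?thesis using I1[OF ab] by simp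
    next
      case 3
      then obtain b' where b': "(v, b') \<in> I" by force
      show ?thesis
      proof (cases "(a,b) = (v,b')")
        case True then show ?thesis using v by simp
      next
        case False
        then show ?thesis using I2[OF ab b'] I1[OF b'] v by auto
      qed
    next
      case 4
      then obtain a' where a': "(a', v) \<in> I" by force
      show ?thesis
      proof (cases "(a,b) = (a',v)")
        case True then show ?thesis by simp
      next
        case False
        then show ?thesis using I2[OF ab a'] I1[OF a'] I1[OF ab] v by auto
      qed
    qed
  qed
  have inj: "inj_on fst I"
  proof (rule inj_onI)
    fix x y assume xy: "x \<in> I" "y \<in> I" "fst x = fst y"
    obtain a b where x: "x = (a,b)" by force
    obtain a' b' where y: "y = (a',b')" by force
    show "x = y"
    proof (rule ccontr)
      assume "x \<noteq> y"
      then show False using I2[of a b a' b'] I1[of a b] I1[of a' b'] xy x y by auto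
    qed
  qed
  have "(\<Sum>(a,b)\<in>I. norm (X b - X a) powr p) = (\<Sum>x\<in>I. norm (X (pnext S (fst x)) - X (fst x)) powr p)"
    by (intro sum.cong refl) (auto simp: pn)
  also have "\<dots> = (\<Sum>a\<in>fst ` I. norm (X (pnext S a) - X a) powr p)"
    using sum.reindex[OF inj, of "\<lambda>a. norm (X (pnext S a) - X a) powr p"] by (simp add: comp_def)
  also have "\<dots> \<le> (\<Sum>a\<in>S - {T}. norm (X (pnext S a) - X a) powr p)"
  proof (rule sum_mono2)
    show "finite (S - {T})" using finS by simp
    show "fst ` I \<subseteq> S - {T}" unfolding S_def using I1 by force
  qed auto
  also have "\<dots> = psum T S (\<lambda>s t. norm (X t - X s) powr p)" unfolding psum_def by simp
  also have "\<dots> \<le> C" by (rule PV[OF partS])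
  finally show ?thesis .
qed

lemma C_nonneg: "C \<ge> 0"
  using pairs_bound[of "{}"] by simp

lemma single_bound:
  assumes "0 \<le> a" "a < b" "b \<le> T"
  shows "norm (X b - X a) powr p \<le> C"
  using pairs_bound[of "{(a,b)}"] assms by simp

lemma single_bound':
  assumes "0 \<le> a" "a < b" "b \<le> T"
  shows "norm (X b - X a) \<le> C powr (1/p)"
proof -
  have "norm (X b - X a) = (norm (X b - X a) powr p) powr (1/p)"
    using p1 by (simp add: powr_powr)
  also have "\<dots> \<le> C powr (1/p)"
    using single_bound[OF assms] p1 by (intro powr_mono2) auto
  finally show ?thesis .
qed

end

context pvpath begin

definition goodpairs :: "real \<Rightarrow> (real \<times> real) set \<Rightarrow> bool" where
  "goodpairs e I \<longleftrightarrow> finite I \<and> (\<forall>a b. (a,b) \<in> I \<longrightarrow> 0 \<le> a \<and> a < b \<and> b \<le> T \<and> norm (X b - X a) \<ge> e) \<and>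
     (\<forall>a b a' b'. (a,b) \<in> I \<longrightarrow> (a',b') \<in> I \<longrightarrow> (a,b) \<noteq> (a',b') \<longrightarrow> b \<le> a' \<or> b' \<le> a)"

lemma no_many_pairs:
  assumes e: "e > 0"
  shows "\<exists>N. \<forall>I. goodpairs e I \<longrightarrow> card I < N"
proof -
  define N where "N = nat \<lceil>C / e powr p\<rceil> + 1"
  have ep: "e powr p > 0" using e by simp
  have "card I < N" if g: "goodpairs e I" for I
  proof (rule ccontr)
    assume "\<not> card I < N"
    then have cN: "card I \<ge> N" by simp
    have fin: "finite I" using g unfolding goodpairs_def by blast
    have "real N * e powr p \<le> real (card I) * e powr p" using cN ep by (intro mult_right_mono) auto
    also have "\<dots> = (\<Sum>x\<in>I. e powr p)" by simp
    also have "\<dots> \<le> (\<Sum>(a,b)\<in>I. norm (X b - X a) powr p)"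
    proof (rule sum_mono)
      fix x assume "x \<in> I"
      then obtain a b where x: "x = (a,b)" "(a,b) \<in> I" by (cases x) auto
      then have "norm (X b - X a) \<ge> e" using g unfolding goodpairs_def by blast
      then show "e powr p \<le> (case x of (a, b) \<Rightarrow> norm (X b - X a) powr p)"
        using x e p1 by (auto intro: powr_mono2)
    qed
    also have "\<dots> \<le> C"
      by (rule pairs_bound) (use g in \<open>auto simp: goodpairs_def\<close>)
    finally have "real N * e powr p \<le> C" .
    moreover have "C / e powr p < real N" unfolding N_def by linarith
    then have "C < real N * e powr p" using ep by (simp add: divide_less_eq)
    ultimately show False by simp
  qed
  then show ?thesis by blast
qed

lemma osc_left:
  assumes t: "0 < t" "t \<le> T" and e: "e > 0"
  shows "\<exists>b<t. 0 \<le> b \<and> (\<forall>u v. b < u \<longrightarrow> u < t \<longrightarrow> b < v \<longrightarrow> v < t \<longrightarrow> norm (X u - X v) < e)"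
proof (rule ccontr)
  assume H: "\<not> ?thesis"
  have H': "\<exists>u v. b < u \<and> u < v \<and> v < t \<and> norm (X v - X u) \<ge> e" if "0 \<le> b" "b < t" for b
  proof -
    from H that obtain u v where uv: "b<u" "u<t" "b<v" "v<t" "\<not> norm (X u - X v) < e" by blast
    consider "u < v" | "v < u" | "u = v" by linarith
    then show ?thesis
    proof cases
      case 1 then show ?thesis using uv by (intro exI[of _ u] exI[of _ v]) (auto simp: norm_minus_commute)
    next
      case 2 then show ?thesis using uv by (intro exI[of _ v] exI[of _ u]) auto
    next
      case 3 then show ?thesis using uv e by simp
    qed
  qed
  have ex: "\<exists>I. goodpairs e I \<and> card I = N \<and> (\<forall>a b. (a,b) \<in> I \<longrightarrow> b < t)" for N
  proof (induction N)
    case 0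
    show ?case by (intro exI[of _ "{}"]) (simp add: goodpairs_def)
  next
    case (Suc N)
    then obtain I where I: "goodpairs e I" "card I = N" "\<And>a b. (a,b) \<in> I \<Longrightarrow> b < t" by blast
    have fin: "finite I" using I(1) unfolding goodpairs_def by blast
    define c where "c = Max (insert 0 (snd ` I))"
    have c0: "0 \<le> c" unfolding c_def using fin by simp
    have ct: "c < t" unfolding c_def using fin t I(3) by (auto simp: Max_less_iff)
    have bc: "b \<le> c" if "(a,b) \<in> I" for a b unfolding c_def using fin that by (auto intro!: Max_ge simp: image_iff) force
    obtain u v where uv: "c < u" "u < v" "v < t" "norm (X v - X u) \<ge> e" using H'[OF c0 ct] by blast
    have notin: "(u,v) \<notin> I" using bc[of u v] uv by auto
    have "goodpairs e (insert (u,v) I)"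
      using I(1) uv c0 t bc unfolding goodpairs_def by (auto; smt (verit) bc)
    moreover have "card (insert (u,v) I) = Suc N" using fin notin I(2) by simp
    moreover have "\<forall>a b. (a,b) \<in> insert (u,v) I \<longrightarrow> b < t" using I(3) uv by auto
    ultimately show ?case by blast
  qed
  obtain N where N: "\<And>I. goodpairs e I \<Longrightarrow> card I < N" using no_many_pairs[OF e] by blast
  from ex[of N] obtain I where "goodpairs e I" "card I = N" by blast
  then show False using N by fastforce
qed

lemma osc_right:
  assumes t: "0 \<le> t" "t < T" and e: "e > 0"
  shows "\<exists>b>t. b \<le> T \<and> (\<forall>u v. t < u \<longrightarrow> u < b \<longrightarrow> t < v \<longrightarrow> v < b \<longrightarrow> norm (X u - X v) < e)"
proof (rule ccontr)
  assume H: "\<not> ?thesis"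
  have H': "\<exists>u v. t < u \<and> u < v \<and> v < b \<and> norm (X v - X u) \<ge> e" if "b \<le> T" "t < b" for b
  proof -
    from H that obtain u v where uv: "t<u" "u<b" "t<v" "v<b" "\<not> norm (X u - X v) < e" by blast
    consider "u < v" | "v < u" | "u = v" by linarith
    then show ?thesis
    proof cases
      case 1 then show ?thesis using uv by (intro exI[of _ u] exI[of _ v]) (auto simp: norm_minus_commute)
    next
      case 2 then show ?thesis using uv by (intro exI[of _ v] exI[of _ u]) auto
    next
      case 3 then show ?thesis using uv e by simp
    qed
  qed
  have ex: "\<exists>I. goodpairs e I \<and> card I = N \<and> (\<forall>a b. (a,b) \<in> I \<longrightarrow> t < a)" for N
  proof (induction N)
    case 0
    show ?case by (intro exI[of _ "{}"]) (simp add: goodpairs_def)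
  next
    case (Suc N)
    then obtain I where I: "goodpairs e I" "card I = N" "\<And>a b. (a,b) \<in> I \<Longrightarrow> t < a" by blast
    have fin: "finite I" using I(1) unfolding goodpairs_def by blast
    define c where "c = Min (insert T (fst ` I))"
    have c0: "c \<le> T" unfolding c_def using fin by simp
    have ct: "t < c" unfolding c_def using fin t I(3) by (auto simp: Min_gr_iff)
    have bc: "c \<le> a" if "(a,b) \<in> I" for a b unfolding c_def using fin that by (auto intro!: Min_le simp: image_iff) force
    obtain u v where uv: "t < u" "u < v" "v < c" "norm (X v - X u) \<ge> e" using H'[OF c0 ct] by blast
    have notin: "(u,v) \<notin> I" using bc[of u v] uv by auto
    have "goodpairs e (insert (u,v) I)"
      using I(1) uv c0 t bc unfolding goodpairs_def by (auto; smt (verit) bc)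
    moreover have "card (insert (u,v) I) = Suc N" using fin notin I(2) by simp
    moreover have "\<forall>a b. (a,b) \<in> insert (u,v) I \<longrightarrow> t < a" using I(3) uv by auto
    ultimately show ?case by blast
  qed
  obtain N where N: "\<And>I. goodpairs e I \<Longrightarrow> card I < N" using no_many_pairs[OF e] by blast
  from ex[of N] obtain I where "goodpairs e I" "card I = N" by blast
  then show False using N by fastforce
qed

lemma complete_UNIV_v: "complete (UNIV :: 'v set)"
  by (meson Cauchy_convergent UNIV_I complete_def convergent_def)

lemma left_lim:
  assumes t: "0 < t" "t \<le> T"
  shows "(X \<longlongrightarrow> lleft X t) (at_left t)"
proof -
  have cf: "cauchy_filter (filtermap X (at_left t))"
    unfolding cauchy_filter_metric_filtermap
  proof (intro allI impI)
    fix e :: real assume e: "e > 0"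
    obtain b where b: "b < t" "\<And>u v. b < u \<Longrightarrow> u < t \<Longrightarrow> b < v \<Longrightarrow> v < t \<Longrightarrow> norm (X u - X v) < e"
      using osc_left[OF t e] by blast
    show "\<exists>P. eventually P (at_left t) \<and> (\<forall>x y. P x \<and> P y \<longrightarrow> dist (X x) (X y) < e)"
      by (intro exI[of _ "\<lambda>x. x \<in> {b<..<t}"] conjI eventually_at_left_real b(1)) (auto simp: dist_norm b(2))
  qed
  have nb: "filtermap X (at_left t) \<noteq> bot" by (simp add: filtermap_bot_iff trivial_limit_at_left_real)
  obtain l where "filtermap X (at_left t) \<le> nhds l"
    using complete_UNIV_v cf nb unfolding complete_uniform by force
  then have lim: "(X \<longlongrightarrow> l) (at_left t)" by (simp add: filterlim_def)
  have "Lim (at_left t) X = l" by (rule tendsto_Lim[OF trivial_limit_at_left_real lim])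
  then show ?thesis unfolding lleft_def using lim by simp
qed

lemma right_lim:
  assumes t: "0 \<le> t" "t < T"
  shows "(X \<longlongrightarrow> lright X t) (at_right t)"
proof -
  have cf: "cauchy_filter (filtermap X (at_right t))"
    unfolding cauchy_filter_metric_filtermap
  proof (intro allI impI)
    fix e :: real assume e: "e > 0"
    obtain b where b: "b > t" "\<And>u v. t < u \<Longrightarrow> u < b \<Longrightarrow> t < v \<Longrightarrow> v < b \<Longrightarrow> norm (X u - X v) < e"
      using osc_right[OF t e] by blast
    show "\<exists>P. eventually P (at_right t) \<and> (\<forall>x y. P x \<and> P y \<longrightarrow> dist (X x) (X y) < e)"
      by (intro exI[of _ "\<lambda>x. x \<in> {t<..<b}"] conjI eventually_at_right_real b(1)) (auto simp: dist_norm b(2))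
  qed
  have nb: "filtermap X (at_right t) \<noteq> bot" by (simp add: filtermap_bot_iff trivial_limit_at_right_real)
  obtain l where "filtermap X (at_right t) \<le> nhds l"
    using complete_UNIV_v cf nb unfolding complete_uniform by force
  then have lim: "(X \<longlongrightarrow> l) (at_right t)" by (simp add: filterlim_def)
  have "Lim (at_right t) X = l" by (rule tendsto_Lim[OF trivial_limit_at_right_real lim])
  then show ?thesis unfolding lright_def using lim by simp
qed

end

context pvpath begin

lemma ev_small: "c > 0 \<Longrightarrow> eventually (\<lambda>h::real. 0 < h \<and> h < c) (at_right 0)"
  using eventually_at_right_real[of 0 c] by (auto elim: eventually_mono)

lemma jumps_left_bound:
  assumes fin: "finite S" and S: "S \<subseteq> {0<..T}"
  shows "(\<Sum>t\<in>S. norm (X t - lleft X t) powr p) \<le> C"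
proof (rule tendsto_upperbound)
  show "((\<lambda>h. \<Sum>t\<in>S. norm (X t - X (t - h)) powr p) \<longlongrightarrow> (\<Sum>t\<in>S. norm (X t - lleft X t) powr p)) (at_right 0)"
  proof (intro tendsto_sum)
    fix t assume t: "t \<in> S"
    have tt: "0 < t" "t \<le> T" using t S by auto
    have fl: "filterlim (\<lambda>h. t - h) (at_left t) (at_right (0::real))"
      unfolding filterlim_at
    proof
      show "eventually (\<lambda>h. t - h \<in> {..<t} \<and> t - h \<noteq> t) (at_right (0::real))"
        using eventually_at_right_less[of 0] by (auto elim: eventually_mono simp: eventually_at_filter)
      have "((\<lambda>h. t - h) \<longlongrightarrow> t - 0) (at_right (0::real))"
        by (intro tendsto_intros tendsto_mono[OF at_le]) auto
      then show "((\<lambda>h. t - h) \<longlongrightarrow> t) (at_right (0::real))" by simp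
    qed
    have "((\<lambda>h. X (t - h)) \<longlongrightarrow> lleft X t) (at_right 0)"
      using filterlim_compose[OF left_lim[OF tt] fl] .
    then have "((\<lambda>h. norm (X t - X (t - h))) \<longlongrightarrow> norm (X t - lleft X t)) (at_right 0)"
      by (intro tendsto_intros)
    then show "((\<lambda>h. norm (X t - X (t - h)) powr p) \<longlongrightarrow> norm (X t - lleft X t) powr p) (at_right 0)"
      using p1 by (intro tendsto_powr2) auto
  qed
  have e1: "\<forall>t\<in>S. eventually (\<lambda>h. h < t) (at_right (0::real))"
  proof
    fix t assume "t \<in> S"
    then have "t > 0" using S by auto
    then show "eventually (\<lambda>h. h < t) (at_right (0::real))" using ev_small[of t] by (auto elim: eventually_mono)
  qed
  have e2: "\<forall>t\<in>S. eventually (\<lambda>h. \<forall>t'\<in>S. t' \<noteq> t \<longrightarrow> h < \<bar>t - t'\<bar>) (at_right (0::real))"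
  proof
    fix t assume "t \<in> S"
    show "eventually (\<lambda>h. \<forall>t'\<in>S. t' \<noteq> t \<longrightarrow> h < \<bar>t - t'\<bar>) (at_right (0::real))"
    proof (rule eventually_ball_finite[OF fin], intro ballI)
      fix t' assume "t' \<in> S"
      show "eventually (\<lambda>h. t' \<noteq> t \<longrightarrow> h < \<bar>t - t'\<bar>) (at_right (0::real))"
      proof (cases "t' = t")
        case False
        then show ?thesis using ev_small[of "\<bar>t - t'\<bar>"] by (auto elim: eventually_mono)
      qed simp
    qed
  qed
  show "eventually (\<lambda>h. (\<Sum>t\<in>S. norm (X t - X (t - h)) powr p) \<le> C) (at_right 0)"
    using eventually_ball_finite[OF fin e1] eventually_ball_finite[OF fin e2] ev_small[OF zero_less_one]
  proof eventually_elim
    case (elim h)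
    define I where "I = (\<lambda>t. (t - h, t)) ` S"
    have inj: "inj_on (\<lambda>t. (t - h, t)) S" by (auto intro: inj_onI)
    have "(\<Sum>t\<in>S. norm (X t - X (t - h)) powr p) = (\<Sum>(a,b)\<in>I. norm (X b - X a) powr p)"
      unfolding I_def by (simp add: sum.reindex[OF inj])
    also have "\<dots> \<le> C"
    proof (rule pairs_bound)
      show "finite I" unfolding I_def using fin by simp
      fix a b assume "(a,b) \<in> I"
      then obtain t where t: "t \<in> S" "a = t - h" "b = t" unfolding I_def by auto
      then show "0 \<le> a \<and> a < b \<and> b \<le> T" using elim S by force
    next
      fix a b a' b' assume ab: "(a,b) \<in> I" "(a',b') \<in> I" "(a,b) \<noteq> (a',b')"
      then obtain t t' where t: "t \<in> S" "a = t - h" "b = t" "t' \<in> S" "a' = t' - h" "b' = t'" unfolding I_def by auto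
      then have "t \<noteq> t'" using ab by auto
      then have "h < \<bar>t - t'\<bar>" using elim t by auto
      then show "b \<le> a' \<or> b' \<le> a" using t by auto
    qed
    finally show ?case .
  qed
qed simp

lemma jumps_right_bound:
  assumes fin: "finite S" and S: "S \<subseteq> {0..<T}"
  shows "(\<Sum>t\<in>S. norm (lright X t - X t) powr p) \<le> C"
proof (rule tendsto_upperbound)
  show "((\<lambda>h. \<Sum>t\<in>S. norm (X (t + h) - X t) powr p) \<longlongrightarrow> (\<Sum>t\<in>S. norm (lright X t - X t) powr p)) (at_right 0)"
  proof (intro tendsto_sum)
    fix t assume t: "t \<in> S"
    have tt: "0 \<le> t" "t < T" using t S by auto
    have fl: "filterlim (\<lambda>h. t + h) (at_right t) (at_right (0::real))"
      unfolding filterlim_at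
    proof
      show "eventually (\<lambda>h. t + h \<in> {t<..} \<and> t + h \<noteq> t) (at_right (0::real))"
        using eventually_at_right_less[of 0] by (auto elim: eventually_mono simp: eventually_at_filter)
      have "((\<lambda>h. t + h) \<longlongrightarrow> t + 0) (at_right (0::real))"
        by (intro tendsto_intros tendsto_mono[OF at_le]) auto
      then show "((\<lambda>h. t + h) \<longlongrightarrow> t) (at_right (0::real))" by simp
    qed
    have "((\<lambda>h. X (t + h)) \<longlongrightarrow> lright X t) (at_right 0)"
      using filterlim_compose[OF right_lim[OF tt] fl] .
    then have "((\<lambda>h. norm (X (t + h) - X t)) \<longlongrightarrow> norm (lright X t - X t)) (at_right 0)"
      by (intro tendsto_intros)
    then show "((\<lambda>h. norm (X (t + h) - X t) powr p) \<longlongrightarrow> norm (lright X t - X t) powr p) (at_right 0)"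
      using p1 by (intro tendsto_powr2) auto
  qed
  have e1: "\<forall>t\<in>S. eventually (\<lambda>h. h < T - t) (at_right (0::real))"
  proof
    fix t assume "t \<in> S"
    then have "T - t > 0" using S by auto
    then show "eventually (\<lambda>h. h < T - t) (at_right (0::real))" using ev_small[of "T - t"] by (auto elim: eventually_mono)
  qed
  have e2: "\<forall>t\<in>S. eventually (\<lambda>h. \<forall>t'\<in>S. t' \<noteq> t \<longrightarrow> h < \<bar>t - t'\<bar>) (at_right (0::real))"
  proof
    fix t assume "t \<in> S"
    show "eventually (\<lambda>h. \<forall>t'\<in>S. t' \<noteq> t \<longrightarrow> h < \<bar>t - t'\<bar>) (at_right (0::real))"
    proof (rule eventually_ball_finite[OF fin], intro ballI)
      fix t' assume "t' \<in> S"
      show "eventually (\<lambda>h. t' \<noteq> t \<longrightarrow> h < \<bar>t - t'\<bar>) (at_right (0::real))"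
      proof (cases "t' = t")
        case False
        then show ?thesis using ev_small[of "\<bar>t - t'\<bar>"] by (auto elim: eventually_mono)
      qed simp
    qed
  qed
  show "eventually (\<lambda>h. (\<Sum>t\<in>S. norm (X (t + h) - X t) powr p) \<le> C) (at_right 0)"
    using eventually_ball_finite[OF fin e1] eventually_ball_finite[OF fin e2] ev_small[OF zero_less_one]
  proof eventually_elim
    case (elim h)
    define I where "I = (\<lambda>t. (t, t + h)) ` S"
    have inj: "inj_on (\<lambda>t. (t, t + h)) S" by (auto intro: inj_onI)
    have "(\<Sum>t\<in>S. norm (X (t + h) - X t) powr p) = (\<Sum>(a,b)\<in>I. norm (X b - X a) powr p)"
      unfolding I_def by (simp add: sum.reindex[OF inj])
    also have "\<dots> \<le> C"
    proof (rule pairs_bound)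
      show "finite I" unfolding I_def using fin by simp
      fix a b assume "(a,b) \<in> I"
      then obtain t where t: "t \<in> S" "a = t" "b = t + h" unfolding I_def by auto
      then show "0 \<le> a \<and> a < b \<and> b \<le> T" using elim S by force
    next
      fix a b a' b' assume ab: "(a,b) \<in> I" "(a',b') \<in> I" "(a,b) \<noteq> (a',b')"
      then obtain t t' where t: "t \<in> S" "a = t" "b = t + h" "t' \<in> S" "a' = t'" "b' = t' + h" unfolding I_def by auto
      then have "t \<noteq> t'" using ab by auto
      then have "h < \<bar>t - t'\<bar>" using elim t by auto
      then show "b \<le> a' \<or> b' \<le> a" using t by auto
    qed
    finally show ?case .
  qed
qed simp

lemma finite_by_bound:
  fixes f :: "real \<Rightarrow> real"
  assumes d: "d > 0" and bd: "\<And>G. finite G \<Longrightarrow> G \<subseteq> A \<Longrightarrow> (\<Sum>t\<in>G. f t powr p) \<le> C"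
    and nn: "\<And>t. f t \<ge> 0"
  shows "finite {t\<in>A. f t \<ge> d}"
proof -
  have dp: "d powr p > 0" using d by simp
  have "card G \<le> nat \<lceil>C / d powr p\<rceil>" if G: "G \<subseteq> {t\<in>A. f t \<ge> d}" "finite G" for G
  proof -
    have "real (card G) * d powr p = (\<Sum>t\<in>G. d powr p)" by simp
    also have "\<dots> \<le> (\<Sum>t\<in>G. f t powr p)" using G d p1 by (intro sum_mono powr_mono2) auto
    also have "\<dots> \<le> C" using bd[OF G(2)] G(1) by auto
    finally have "real (card G) \<le> C / d powr p" using dp by (simp add: le_divide_eq)
    then show ?thesis by linarith
  qed
  then show ?thesis using finite_if_finite_subsets_card_bdd by blast
qed

lemma big_left_jumps_finite: "d > 0 \<Longrightarrow> finite {t\<in>{0<..T}. norm (X t - lleft X t) \<ge> d}"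
  by (rule finite_by_bound) (auto intro: jumps_left_bound)

lemma big_right_jumps_finite: "d > 0 \<Longrightarrow> finite {t\<in>{0..<T}. norm (lright X t - X t) \<ge> d}"
  by (rule finite_by_bound) (auto intro: jumps_right_bound)

end

context pvpath begin

lemma gauge_point:
  assumes d: "d > 0"
  shows "\<exists>g>0. (0 < x \<and> x \<le> T \<longrightarrow> (\<forall>u. x - g < u \<and> u < x \<longrightarrow> norm (X u - lleft X x) < d)) \<and>
               (0 \<le> x \<and> x < T \<longrightarrow> (\<forall>u. x < u \<and> u < x + g \<longrightarrow> norm (X u - lright X x) < d))"
proof -
  obtain g1 where g1: "g1 > 0" "0 < x \<and> x \<le> T \<longrightarrow> (\<forall>u. x - g1 < u \<and> u < x \<longrightarrow> norm (X u - lleft X x) < d)"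
  proof (cases "0 < x \<and> x \<le> T")
    case True
    have "eventually (\<lambda>u. dist (X u) (lleft X x) < d) (at_left x)"
      using tendstoD[OF left_lim d] True by blast
    then obtain b where b: "b < x" "\<And>u. b < u \<Longrightarrow> u < x \<Longrightarrow> dist (X u) (lleft X x) < d"
      unfolding eventually_at_left_field by blast
    show ?thesis by (rule that[of "x - b"]) (use b in \<open>auto simp: dist_norm\<close>)
  next
    case False
    show ?thesis by (rule that[of 1]) (use False in auto)
  qed
  obtain g2 where g2: "g2 > 0" "0 \<le> x \<and> x < T \<longrightarrow> (\<forall>u. x < u \<and> u < x + g2 \<longrightarrow> norm (X u - lright X x) < d)"
  proof (cases "0 \<le> x \<and> x < T")
    case True
    have "eventually (\<lambda>u. dist (X u) (lright X x) < d) (at_right x)"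
      using tendstoD[OF right_lim d] True by blast
    then obtain b where b: "b > x" "\<And>u. x < u \<Longrightarrow> u < b \<Longrightarrow> dist (X u) (lright X x) < d"
      unfolding eventually_at_right_field by blast
    show ?thesis by (rule that[of "b - x"]) (use b in \<open>auto simp: dist_norm\<close>)
  next
    case False
    show ?thesis by (rule that[of 1]) (use False in auto)
  qed
  show ?thesis
    by (rule exI[of _ "min g1 g2"]) (use g1 g2 in auto)
qed

lemma regulated:
  assumes d: "d > 0"
  shows "\<exists>P1. is_partition T P1 \<and> (\<forall>u v w w'. 0 \<le> u \<longrightarrow> v \<le> T \<longrightarrow> (\<forall>z\<in>P1. z \<le> u \<or> v \<le> z) \<longrightarrow>
            u < w \<longrightarrow> w < v \<longrightarrow> u < w' \<longrightarrow> w' < v \<longrightarrow> norm (X w - X w') < d)"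
proof -
  have d2: "d / 2 > 0" using d by simp
  have "\<forall>x. \<exists>g>0. (0 < x \<and> x \<le> T \<longrightarrow> (\<forall>u. x - g < u \<and> u < x \<longrightarrow> norm (X u - lleft X x) < d / 2)) \<and>
               (0 \<le> x \<and> x < T \<longrightarrow> (\<forall>u. x < u \<and> u < x + g \<longrightarrow> norm (X u - lright X x) < d / 2))"
    using gauge_point[OF d2] by blast
  then obtain \<gamma> where \<gamma>: "\<And>x. \<gamma> x > 0"
    "\<And>x u. 0 < x \<Longrightarrow> x \<le> T \<Longrightarrow> x - \<gamma> x < u \<Longrightarrow> u < x \<Longrightarrow> norm (X u - lleft X x) < d / 2"
    "\<And>x u. 0 \<le> x \<Longrightarrow> x < T \<Longrightarrow> x < u \<Longrightarrow> u < x + \<gamma> x \<Longrightarrow> norm (X u - lright X x) < d / 2"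
    by metis
  have "gauge (\<lambda>x. ball x (\<gamma> x))" using \<gamma>(1) by (intro gauge_ball_dependent) auto
  then obtain D where D: "D tagged_division_of {0..T}" "(\<lambda>x. ball x (\<gamma> x)) fine D"
    using fine_division_exists_real by blast
  have Dfin: "finite D" using D(1) by blast
  have Dx: "\<And>x K. (x,K) \<in> D \<Longrightarrow> x \<in> K" using D(1) by blast
  have DK: "\<And>x K. (x,K) \<in> D \<Longrightarrow> K \<subseteq> {0..T}" using D(1) by blast
  have Dab: "\<And>x K. (x,K) \<in> D \<Longrightarrow> \<exists>a b. K = {a..b}" using tagged_division_ofD(4)[OF D(1)] by (metis box_real(2))
  have Dcov: "\<Union>{K. \<exists>x. (x,K) \<in> D} = {0..T}" using tagged_division_ofD(6)[OF D(1)] .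
  have Dfine: "\<And>x K. (x,K) \<in> D \<Longrightarrow> K \<subseteq> ball x (\<gamma> x)" using D(2) unfolding fine_def by blast
  define P1 where "P1 = {0,T} \<union> (\<Union>(x,K)\<in>D. {x, Inf K, Sup K})"
  have IS: "Inf K \<in> K \<and> Sup K \<in> K \<and> K = {Inf K..Sup K}" if xKD: "(x,K) \<in> D" for x K
  proof -
    obtain a b where K: "K = {a..b}" using Dab[OF xKD] by blast
    have "a \<le> b" using Dx[OF xKD] K by auto
    then show ?thesis using K by simp
  qed
  have part: "is_partition T P1"
    unfolding is_partition_def P1_def
  proof (intro conjI)
    show "finite ({0, T} \<union> (\<Union>(x, K)\<in>D. {x, Inf K, Sup K}))" using Dfin by auto
    have "{x, Inf K, Sup K} \<subseteq> {0..T}" if xKD: "(x,K) \<in> D" for x K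
      using Dx[OF xKD] DK[OF xKD] IS[OF xKD] by blast
    then show "{0, T} \<union> (\<Union>(x, K)\<in>D. {x, Inf K, Sup K}) \<subseteq> {0..T}"
      using T0 by auto
  qed auto
  have key: "norm (X w - X w') < d"
    if uv: "0 \<le> u" "v \<le> T" "\<forall>z\<in>P1. z \<le> u \<or> v \<le> z" "u < w" "w < v" "u < w'" "w' < v" for u v w w'
  proof -
    have "w \<in> {0..T}" using uv by auto
    then obtain x K where xK: "(x,K) \<in> D" "w \<in> K" using Dcov by blast
    define a where "a = Inf K"
    define b where "b = Sup K"
    have K: "K = {a..b}" "a \<in> K" "b \<in> K" using IS[OF xK(1)] unfolding a_def b_def by auto
    have "{x, a, b} \<subseteq> P1" unfolding P1_def a_def b_def using xK(1) by (intro Un_upper2[THEN subsetD] UN_I[of "(x,K)"] subsetI) auto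
    then have inP: "x \<in> P1" "a \<in> P1" "b \<in> P1" by auto
    have wK: "a \<le> w" "w \<le> b" using xK(2) K(1) by auto
    have au: "a \<le> u" using uv(3)[rule_format, OF inP(2)] wK uv(5) by linarith
    have bv: "v \<le> b" using uv(3)[rule_format, OF inP(3)] wK uv(4) by linarith
    have ball: "a \<in> ball x (\<gamma> x)" "b \<in> ball x (\<gamma> x)" using Dfine[OF xK(1)] K by auto
    then have ab: "x - \<gamma> x < a" "b < x + \<gamma> x" by (auto simp: dist_real_def)
    have x0T: "0 \<le> x" "x \<le> T" using Dx[OF xK(1)] DK[OF xK(1)] by auto
    from uv(3) inP(1) consider "x \<le> u" | "v \<le> x" by blast
    then show ?thesis
    proof cases
      case 1
      have xT: "x < T" using 1 uv by linarith
      have "norm (X w - lright X x) < d / 2" using \<gamma>(3)[OF x0T(1) xT, of w] 1 uv bv ab by linarith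
      moreover have "norm (X w' - lright X x) < d / 2" using \<gamma>(3)[OF x0T(1) xT, of w'] 1 uv bv ab by linarith
      ultimately show ?thesis using norm_triangle_lt[of "X w - lright X x" "lright X x - X w'" d]
        by (simp add: norm_minus_commute)
    next
      case 2
      have xT: "0 < x" using 2 uv by linarith
      have "norm (X w - lleft X x) < d / 2" using \<gamma>(2)[OF xT x0T(2), of w] 2 uv au ab by linarith
      moreover have "norm (X w' - lleft X x) < d / 2" using \<gamma>(2)[OF xT x0T(2), of w'] 2 uv au ab by linarith
      ultimately show ?thesis using norm_triangle_lt[of "X w - lleft X x" "lleft X x - X w'" d]
        by (simp add: norm_minus_commute)
    qed
  qed
  show ?thesis using part key by blast
qed

end

context pvpath begin

lemma lim_close:
  assumes st: "0 \<le> s" "s < t" "t \<le> T"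
    and osc: "\<And>w w'. s < w \<Longrightarrow> w < t \<Longrightarrow> s < w' \<Longrightarrow> w' < t \<Longrightarrow> norm (X w - X w') < d"
  shows "norm (lright X s - lleft X t) \<le> d"
proof -
  have tl: "(X \<longlongrightarrow> lleft X t) (at_left t)" using left_lim st by simp
  have sr: "(X \<longlongrightarrow> lright X s) (at_right s)" using right_lim st by simp
  have w: "norm (X w - lleft X t) \<le> d" if w: "s < w" "w < t" for w
  proof (rule Lim_norm_ubound[OF trivial_limit_at_left_real])
    show "((\<lambda>w'. X w - X w') \<longlongrightarrow> X w - lleft X t) (at_left t)" by (intro tendsto_intros tl)
    show "eventually (\<lambda>w'. norm (X w - X w') \<le> d) (at_left t)"
      using eventually_at_left_real[OF st(2)] by eventually_elim (use osc w in \<open>auto intro: less_imp_le\<close>)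
  qed
  show ?thesis
  proof (rule Lim_norm_ubound[OF trivial_limit_at_right_real])
    show "((\<lambda>w. X w - lleft X t) \<longlongrightarrow> lright X s - lleft X t) (at_right s)" by (intro tendsto_intros sr)
    show "eventually (\<lambda>w. norm (X w - lleft X t) \<le> d) (at_right s)"
      using eventually_at_right_real[OF st(2)] by eventually_elim (use w in auto)
  qed
qed

lemma left_jump_le:
  assumes t: "0 < t" "t \<le> T"
  shows "norm (X t - lleft X t) \<le> C powr (1/p)"
proof (rule Lim_norm_ubound[OF trivial_limit_at_left_real])
  show "((\<lambda>u. X t - X u) \<longlongrightarrow> X t - lleft X t) (at_left t)" by (intro tendsto_intros left_lim t)
  show "eventually (\<lambda>u. norm (X t - X u) \<le> C powr (1/p)) (at_left t)"
    using eventually_at_left_real[OF t(1)] by eventually_elim (use single_bound' t in auto)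
qed

lemma right_jump_le:
  assumes t: "0 \<le> t" "t < T"
  shows "norm (lright X t - X t) \<le> C powr (1/p)"
proof (rule Lim_norm_ubound[OF trivial_limit_at_right_real])
  show "((\<lambda>u. X u - X t) \<longlongrightarrow> lright X t - X t) (at_right t)" by (intro tendsto_intros right_lim t)
  show "eventually (\<lambda>u. norm (X u - X t) \<le> C powr (1/p)) (at_right t)"
    using eventually_at_right_real[OF t(2)] by eventually_elim (use single_bound' t in auto)
qed

end

lemma powr_trade:
  fixes x eta :: real
  assumes x: "0 \<le> x" "x \<le> eta" and pn: "p < real (Suc n)" and p: "p > 0"
  shows "x ^ Suc n \<le> eta powr (real (Suc n) - p) * x powr p"
proof (cases "x = 0")
  case True then show ?thesis by simp
next
  case False
  then have xp: "x > 0" using x by simp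
  have "x ^ Suc n = x powr (real (Suc n))" by (rule powr_realpow[symmetric, OF xp])
  also have "\<dots> = x powr (real (Suc n) - p) * x powr p" by (simp add: powr_add[symmetric])
  also have "\<dots> \<le> eta powr (real (Suc n) - p) * x powr p"
    using x pn by (intro mult_right_mono powr_mono2) auto
  finally show ?thesis .
qed

locale itoF = pvpath p T C X for p T C :: real and X :: "real \<Rightarrow> 'v::banach" +
  fixes F :: "'v \<Rightarrow> 'u::banach" and D :: "nat \<Rightarrow> 'v \<Rightarrow> 'v list \<Rightarrow> 'u" and n :: nat
  assumes ck: "Ckb (Suc n) F D" and np: "p < real (Suc n)"
begin

definition KR where "KR = (SOME K. K \<ge> 0 \<and> (\<forall>x y. norm (Rm F D n x y) \<le> K * norm (y - x)^(Suc n)))"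

lemma KR: "KR \<ge> 0" "norm (Rm F D n x y) \<le> KR * norm (y - x)^(Suc n)"
proof -
  have "\<exists>K. K \<ge> 0 \<and> (\<forall>x y. norm (Rm F D n x y) \<le> K * norm (y - x)^(Suc n))" using Rm_bound[OF ck] by blast
  from someI_ex[OF this] show "KR \<ge> 0" "norm (Rm F D n x y) \<le> KR * norm (y - x)^(Suc n)"
    unfolding KR_def by blast+
qed

lemma Rm_trade:
  assumes "norm (y - x) \<le> eta"
  shows "norm (Rm F D n x y) \<le> KR * eta powr (real (Suc n) - p) * norm (y - x) powr p"
proof -
  have "norm (Rm F D n x y) \<le> KR * norm (y - x)^(Suc n)" by (rule KR)
  also have "\<dots> \<le> KR * (eta powr (real (Suc n) - p) * norm (y - x) powr p)"
    using powr_trade[OF norm_ge_zero assms np] p1 KR(1) by (intro mult_left_mono) auto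
  finally show ?thesis by (simp add: mult.assoc)
qed

lemma JL_eq: "jump_left F D n X t = Rm F D n (lleft X t) (X t)"
  unfolding jump_left_def Rm_def by simp

lemma JR_eq: "jump_right F D n X t = Rm F D n (X t) (lright X t)"
  unfolding jump_right_def Rm_def by simp

lemma JL_summable: "(\<lambda>t. norm (jump_left F D n X t)) summable_on {0<..T}"
proof (rule nonneg_bdd_above_summable_on)
  define M where "M = C powr (1/p)"
  define B where "B = KR * M powr (real (Suc n) - p) * C"
  show "bdd_above (sum (\<lambda>t. norm (jump_left F D n X t)) ` {G. G \<subseteq> {0<..T} \<and> finite G})"
  proof (rule bdd_aboveI2)
    fix G assume G: "G \<in> {G. G \<subseteq> {0<..T} \<and> finite G}"
    have "(\<Sum>t\<in>G. norm (jump_left F D n X t)) \<le> (\<Sum>t\<in>G. KR * M powr (real (Suc n) - p) * norm (X t - lleft X t) powr p)"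
    proof (rule sum_mono)
      fix t assume "t \<in> G"
      then have t: "0 < t" "t \<le> T" using G by auto
      show "norm (jump_left F D n X t) \<le> KR * M powr (real (Suc n) - p) * norm (X t - lleft X t) powr p"
        unfolding JL_eq M_def by (rule Rm_trade[OF left_jump_le[OF t]])
    qed
    also have "\<dots> = KR * M powr (real (Suc n) - p) * (\<Sum>t\<in>G. norm (X t - lleft X t) powr p)"
      by (simp add: sum_distrib_left)
    also have "\<dots> \<le> B" unfolding B_def using G KR(1) by (intro mult_left_mono jumps_left_bound) auto
    finally show "(\<Sum>t\<in>G. norm (jump_left F D n X t)) \<le> B" .
  qed
qed simp

lemma JR_summable: "(\<lambda>t. norm (jump_right F D n X t)) summable_on {0..<T}"
proof (rule nonneg_bdd_above_summable_on)
  define M where "M = C powr (1/p)"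
  define B where "B = KR * M powr (real (Suc n) - p) * C"
  show "bdd_above (sum (\<lambda>t. norm (jump_right F D n X t)) ` {G. G \<subseteq> {0..<T} \<and> finite G})"
  proof (rule bdd_aboveI2)
    fix G assume G: "G \<in> {G. G \<subseteq> {0..<T} \<and> finite G}"
    have "(\<Sum>t\<in>G. norm (jump_right F D n X t)) \<le> (\<Sum>t\<in>G. KR * M powr (real (Suc n) - p) * norm (lright X t - X t) powr p)"
    proof (rule sum_mono)
      fix t assume "t \<in> G"
      then have t: "0 \<le> t" "t < T" using G by auto
      show "norm (jump_right F D n X t) \<le> KR * M powr (real (Suc n) - p) * norm (lright X t - X t) powr p"
        unfolding JR_eq M_def by (rule Rm_trade[OF right_jump_le[OF t]])
    qed
    also have "\<dots> = KR * M powr (real (Suc n) - p) * (\<Sum>t\<in>G. norm (lright X t - X t) powr p)"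
      by (simp add: sum_distrib_left)
    also have "\<dots> \<le> B" unfolding B_def using G KR(1) by (intro mult_left_mono jumps_right_bound) auto
    finally show "(\<Sum>t\<in>G. norm (jump_right F D n X t)) \<le> B" .
  qed
qed simp

lemma JL_countable: "countable {t\<in>{0<..T}. jump_left F D n X t \<noteq> 0}"
  using abs_summable_countable[OF JL_summable] .

lemma JR_countable: "countable {t\<in>{0..<T}. jump_right F D n X t \<noteq> 0}"
  using abs_summable_countable[OF JR_summable] .

end

lemma ev_pick: "eventually P (at_right (0::real)) \<Longrightarrow> \<exists>x>0. P x"
proof -
  assume "eventually P (at_right (0::real))"
  then obtain b where b: "b > 0" "\<And>y. y > 0 \<Longrightarrow> y < b \<Longrightarrow> P y" unfolding eventually_at_right_field by auto
  then show ?thesis by (intro exI[of _ "b/2"]) auto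
qed

lemma tail_set:
  fixes f :: "real \<Rightarrow> 'u::banach"
  assumes "f summable_on A" "e > 0"
  shows "\<exists>S. finite S \<and> S \<subseteq> A \<and> (\<forall>G. finite G \<longrightarrow> S \<subseteq> G \<longrightarrow> G \<subseteq> A \<longrightarrow> dist (sum f G) (infsum f A) < e)"
proof -
  have "(sum f \<longlongrightarrow> infsum f A) (finite_subsets_at_top A)"
    using has_sum_infsum[OF assms(1)] by (simp add: has_sum_def)
  then have "eventually (\<lambda>G. dist (sum f G) (infsum f A) < e) (finite_subsets_at_top A)"
    using assms(2) by (rule tendstoD)
  then obtain S where "finite S" "S \<subseteq> A" "\<And>Y. finite Y \<and> S \<subseteq> Y \<and> Y \<subseteq> A \<Longrightarrow> dist (sum f Y) (infsum f A) < e"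
    unfolding eventually_finite_subsets_at_top by metis
  then show ?thesis by blast
qed

context itoF begin

definition rr where "rr s t = Rm F D n (X s) (X t)"

lemma rough_eq:
  assumes P: "is_partition T P"
  shows "rough_sum D n T X P = (F (X T) - F (X 0)) - psum T P rr"
proof -
  have "rough_sum D n T X P = (\<Sum>s\<in>P - {T}. (F (X (pnext P s)) - F (X s)) - rr s (pnext P s))"
    unfolding rough_sum_def psum_def rr_def Rm_def by simp
  also have "\<dots> = (\<Sum>s\<in>P - {T}. F (X (pnext P s)) - F (X s)) - (\<Sum>s\<in>P - {T}. rr s (pnext P s))"
    by (rule sum_subtractf)
  also have "(\<Sum>s\<in>P - {T}. F (X (pnext P s)) - F (X s)) = F (X T) - F (X 0)"
    using psum_telescope[OF P, of "\<lambda>t. F (X t)"] unfolding psum_def .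
  finally show ?thesis unfolding psum_def .
qed

lemma conv:
  assumes e: "\<epsilon> > 0"
  shows "\<exists>Pe. is_partition T Pe \<and> (\<forall>P. is_partition T P \<and> Pe \<subseteq> P \<longrightarrow>
     norm (psum T P rr - (infsum (jump_left F D n X) {0<..T} + infsum (jump_right F D n X) {0..<T})) < \<epsilon>)"
proof -
  define JL where "JL = jump_left F D n X"
  define JR where "JR = jump_right F D n X"
  define SL where "SL = infsum JL {0<..T}"
  define SR where "SR = infsum JR {0..<T}"
  define \<theta> where "\<theta> = real (Suc n) - p"
  have \<theta>: "\<theta> > 0" using np by (simp add: \<theta>_def)
  have C0: "C \<ge> 0" by (rule C_nonneg)
  have "((\<lambda>\<eta>::real. KR * \<eta> powr \<theta> * C) \<longlongrightarrow> KR * 0 powr \<theta> * C) (at_right 0)"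
  proof (intro tendsto_mult tendsto_const tendsto_powr2[OF _ tendsto_const _ \<theta>])
    show "((\<lambda>x::real. x) \<longlongrightarrow> 0) (at_right 0)" by (rule tendsto_ident_at)
    show "\<forall>\<^sub>F x in at_right 0. 0 \<le> (x::real)" using ev_small[OF zero_less_one] by (auto elim: eventually_mono)
  qed
  then have "eventually (\<lambda>\<eta>. KR * \<eta> powr \<theta> * C < \<epsilon> / 4) (at_right 0)"
    using e by (intro order_tendstoD(2)) auto
  then have "eventually (\<lambda>\<eta>. KR * \<eta> powr \<theta> * C < \<epsilon> / 4 \<and> 0 < \<eta>) (at_right 0)"
    using ev_small[OF zero_less_one] by eventually_elim auto
  then obtain \<eta>0 where \<eta>0: "\<eta>0 > 0" "KR * \<eta>0 powr \<theta> * C < \<epsilon> / 4" using ev_pick by blast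
  define \<delta> where "\<delta> = \<eta>0 / 3"
  have \<delta>: "\<delta> > 0" using \<eta>0 by (simp add: \<delta>_def)
  define S1 where "S1 = {t\<in>{0<..T}. norm (X t - lleft X t) \<ge> \<delta>}"
  define S2 where "S2 = {t\<in>{0..<T}. norm (lright X t - X t) \<ge> \<delta>}"
  have fS1: "finite S1" unfolding S1_def by (rule big_left_jumps_finite[OF \<delta>])
  have fS2: "finite S2" unfolding S2_def by (rule big_right_jumps_finite[OF \<delta>])
  have e8: "\<epsilon> / 8 > 0" using e by simp
  obtain S3 where S3: "finite S3" "S3 \<subseteq> {0<..T}"
    "\<And>G. finite G \<Longrightarrow> S3 \<subseteq> G \<Longrightarrow> G \<subseteq> {0<..T} \<Longrightarrow> dist (sum JL G) SL < \<epsilon> / 8"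
    using tail_set[OF abs_summable_summable[OF JL_summable] e8] unfolding JL_def SL_def by blast
  obtain S4 where S4: "finite S4" "S4 \<subseteq> {0..<T}"
    "\<And>G. finite G \<Longrightarrow> S4 \<subseteq> G \<Longrightarrow> G \<subseteq> {0..<T} \<Longrightarrow> dist (sum JR G) SR < \<epsilon> / 8"
    using tail_set[OF abs_summable_summable[OF JR_summable] e8] unfolding JR_def SR_def by blast
  define S0 where "S0 = {0,T} \<union> S1 \<union> S2 \<union> S3 \<union> S4"
  have fS0: "finite S0" unfolding S0_def using fS1 fS2 S3(1) S4(1) by simp
  have S0sub: "S0 \<subseteq> {0..T}" unfolding S0_def S1_def S2_def using S3(2) S4(2) T0 by auto
  have S0T: "0 \<in> S0" "T \<in> S0" unfolding S0_def by auto
  define m where "m = card S0"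
  define tol where "tol = \<epsilon> / (8 * (real m + 1))"
  have tol: "tol > 0" unfolding tol_def using e by (intro divide_pos_pos) auto
  have evR: "\<forall>a\<in>S0. eventually (\<lambda>\<eta>. a < T \<longrightarrow> (\<forall>t. a < t \<and> t \<le> a + \<eta> \<longrightarrow> norm (rr a t - JR a) < tol)) (at_right 0)"
  proof
    fix a assume a: "a \<in> S0"
    show "eventually (\<lambda>\<eta>. a < T \<longrightarrow> (\<forall>t. a < t \<and> t \<le> a + \<eta> \<longrightarrow> norm (rr a t - JR a) < tol)) (at_right 0)"
    proof (cases "a < T")
      case True
      have a0: "0 \<le> a" using a S0sub by auto
      have "((\<lambda>t. Rm F D n (X a) (X t)) \<longlongrightarrow> Rm F D n (X a) (lright X a)) (at_right a)"
        by (rule Rm_tend[OF ck tendsto_const right_lim[OF a0 True]])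
      then have "eventually (\<lambda>t. dist (Rm F D n (X a) (X t)) (Rm F D n (X a) (lright X a)) < tol) (at_right a)"
        using tol by (rule tendstoD)
      then obtain b where b: "b > a" "\<And>t. t > a \<Longrightarrow> t < b \<Longrightarrow> dist (Rm F D n (X a) (X t)) (Rm F D n (X a) (lright X a)) < tol"
        unfolding eventually_at_right_field by blast
      have "eventually (\<lambda>\<eta>::real. 0 < \<eta> \<and> \<eta> < b - a) (at_right 0)" using b(1) by (intro ev_small) simp
      then show ?thesis
      proof eventually_elim
        case (elim \<eta>)
        show ?case
        proof (intro impI allI)
          fix t assume t: "a < t \<and> t \<le> a + \<eta>"
          then have "dist (Rm F D n (X a) (X t)) (Rm F D n (X a) (lright X a)) < tol" using elim by (intro b(2)) auto
          then show "norm (rr a t - JR a) < tol" unfolding rr_def JR_def JR_eq dist_norm .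
        qed
      qed
    next
      case False
      then show ?thesis by simp
    qed
  qed
  have evL: "\<forall>a\<in>S0. eventually (\<lambda>\<eta>. 0 < a \<longrightarrow> (\<forall>s. a - \<eta> \<le> s \<and> s < a \<longrightarrow> norm (rr s a - JL a) < tol)) (at_right 0)"
  proof
    fix a assume a: "a \<in> S0"
    show "eventually (\<lambda>\<eta>. 0 < a \<longrightarrow> (\<forall>s. a - \<eta> \<le> s \<and> s < a \<longrightarrow> norm (rr s a - JL a) < tol)) (at_right 0)"
    proof (cases "0 < a")
      case True
      have aT: "a \<le> T" using a S0sub by auto
      have "((\<lambda>s. Rm F D n (X s) (X a)) \<longlongrightarrow> Rm F D n (lleft X a) (X a)) (at_left a)"
        by (rule Rm_tend[OF ck left_lim[OF True aT] tendsto_const])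
      then have "eventually (\<lambda>s. dist (Rm F D n (X s) (X a)) (Rm F D n (lleft X a) (X a)) < tol) (at_left a)"
        using tol by (rule tendstoD)
      then obtain b where b: "b < a" "\<And>s. s > b \<Longrightarrow> s < a \<Longrightarrow> dist (Rm F D n (X s) (X a)) (Rm F D n (lleft X a) (X a)) < tol"
        unfolding eventually_at_left_field by blast
      have "eventually (\<lambda>\<eta>::real. 0 < \<eta> \<and> \<eta> < a - b) (at_right 0)" using b(1) by (intro ev_small) simp
      then show ?thesis
      proof eventually_elim
        case (elim \<eta>)
        show ?case
        proof (intro impI allI)
          fix s assume s: "a - \<eta> \<le> s \<and> s < a"
          then have "dist (Rm F D n (X s) (X a)) (Rm F D n (lleft X a) (X a)) < tol" using elim by (intro b(2)) auto
          then show "norm (rr s a - JL a) < tol" unfolding rr_def JL_def JL_eq dist_norm .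
        qed
      qed
    next
      case False
      then show ?thesis by simp
    qed
  qed
  have evG: "\<forall>a\<in>S0. eventually (\<lambda>\<eta>. \<forall>b\<in>S0. a < b \<longrightarrow> 2 * \<eta> < b - a) (at_right 0)"
  proof
    fix a assume "a \<in> S0"
    show "eventually (\<lambda>\<eta>. \<forall>b\<in>S0. a < b \<longrightarrow> 2 * \<eta> < b - a) (at_right 0)"
    proof (rule eventually_ball_finite[OF fS0], intro ballI)
      fix b assume "b \<in> S0"
      show "eventually (\<lambda>\<eta>. a < b \<longrightarrow> 2 * \<eta> < b - a) (at_right 0)"
      proof (cases "a < b")
        case True
        then have "eventually (\<lambda>\<eta>::real. 0 < \<eta> \<and> \<eta> < (b - a) / 2) (at_right 0)" by (intro ev_small) simp
        then show ?thesis by eventually_elim auto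
      qed simp
    qed
  qed
  have ev3: "eventually (\<lambda>\<eta>. (\<forall>a\<in>S0. a < T \<longrightarrow> (\<forall>t. a < t \<and> t \<le> a + \<eta> \<longrightarrow> norm (rr a t - JR a) < tol)) \<and>
      (\<forall>a\<in>S0. 0 < a \<longrightarrow> (\<forall>s. a - \<eta> \<le> s \<and> s < a \<longrightarrow> norm (rr s a - JL a) < tol)) \<and>
      (\<forall>a\<in>S0. \<forall>b\<in>S0. a < b \<longrightarrow> 2 * \<eta> < b - a)) (at_right 0)"
    by (intro eventually_conj eventually_ball_finite[OF fS0] evR evL evG)
  have "\<exists>\<eta>>0. (\<forall>a\<in>S0. a < T \<longrightarrow> (\<forall>t. a < t \<and> t \<le> a + \<eta> \<longrightarrow> norm (rr a t - JR a) < tol)) \<and>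
      (\<forall>a\<in>S0. 0 < a \<longrightarrow> (\<forall>s. a - \<eta> \<le> s \<and> s < a \<longrightarrow> norm (rr s a - JL a) < tol)) \<and>
      (\<forall>a\<in>S0. \<forall>b\<in>S0. a < b \<longrightarrow> 2 * \<eta> < b - a)"
    by (rule ev_pick[OF ev3])
  then obtain \<eta> where \<eta>: "\<eta> > 0"
    and HR: "\<forall>a\<in>S0. a < T \<longrightarrow> (\<forall>t. a < t \<and> t \<le> a + \<eta> \<longrightarrow> norm (rr a t - JR a) < tol)"
    and HL: "\<forall>a\<in>S0. 0 < a \<longrightarrow> (\<forall>s. a - \<eta> \<le> s \<and> s < a \<longrightarrow> norm (rr s a - JL a) < tol)"
    and HG: "\<forall>a\<in>S0. \<forall>b\<in>S0. a < b \<longrightarrow> 2 * \<eta> < b - a"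
    by (elim exE conjE) (rule that; assumption)
  have etaR: "norm (rr a t - JR a) < tol" if "a \<in> S0" "a < T" "a < t" "t \<le> a + \<eta>" for a t
    using HR that by blast
  have etaL: "norm (rr s a - JL a) < tol" if "a \<in> S0" "0 < a" "a - \<eta> \<le> s" "s < a" for a s
    using HL that by blast
  have gap: "2 * \<eta> < b - a" if "a \<in> S0" "b \<in> S0" "a < b" for a b
    using HG that by blast
  obtain P1 where P1: "is_partition T P1"
    and KEYH: "\<forall>u v w w'. 0 \<le> u \<longrightarrow> v \<le> T \<longrightarrow> (\<forall>z\<in>P1. z \<le> u \<or> v \<le> z) \<longrightarrow>
            u < w \<longrightarrow> w < v \<longrightarrow> u < w' \<longrightarrow> w' < v \<longrightarrow> norm (X w - X w') < \<delta>"
    using regulated[OF \<delta>] by (elim exE conjE) (rule that; assumption)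
  have KEY: "norm (X w - X w') < \<delta>" if "0 \<le> u" "v \<le> T" "\<forall>z\<in>P1. z \<le> u \<or> v \<le> z"
      "u < w" "w < v" "u < w'" "w' < v" for u v w w'
    using KEYH that by blast
  define Pe where "Pe = P1 \<union> S0 \<union> (\<lambda>a. a + \<eta>) ` {a\<in>S0. a < T} \<union> (\<lambda>a. a - \<eta>) ` {a\<in>S0. 0 < a}"
  have Pe_part: "is_partition T Pe"
    unfolding is_partition_def
  proof (intro conjI)
    show "finite Pe" unfolding Pe_def using P1 fS0 unfolding is_partition_def by auto
    have "a + \<eta> \<in> {0..T}" if "a \<in> S0" "a < T" for a
      using gap[OF that(1) S0T(2) that(2)] that S0sub \<eta> by auto
    moreover have "a - \<eta> \<in> {0..T}" if "a \<in> S0" "0 < a" for a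
      using gap[OF S0T(1) that(1) that(2)] that S0sub \<eta> by auto
    ultimately show "Pe \<subseteq> {0..T}" unfolding Pe_def using P1 S0sub unfolding is_partition_def by auto
    show "0 \<in> Pe" "T \<in> Pe" unfolding Pe_def using S0T by auto
  qed
  show ?thesis
  proof (intro exI[of _ Pe] conjI allI impI Pe_part)
    fix P assume PP: "is_partition T P \<and> Pe \<subseteq> P"
    then have P: "is_partition T P" and sub: "Pe \<subseteq> P" by auto
    define nx where "nx = pnext P"
    define Q where "Q = P - {T}"
    define f where "f s = rr s (nx s)" for s
    have finP: "finite P" using P unfolding is_partition_def by blast
    have finQ: "finite Q" unfolding Q_def using finP by simp
    have nxQ: "nx s \<in> P" "s < nx s" "\<And>v. v \<in> P \<Longrightarrow> s < v \<Longrightarrow> nx s \<le> v" "0 \<le> s" "nx s \<le> T" if "s \<in> Q" for s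
      using partition_next[OF P, of s] that unfolding Q_def nx_def by auto
    have S0P: "S0 \<subseteq> P" using sub unfolding Pe_def by auto
    have P1P: "P1 \<subseteq> P" using sub unfolding Pe_def by auto
    have plusP: "a + \<eta> \<in> P" if "a \<in> S0" "a < T" for a using sub that unfolding Pe_def by auto
    have minusP: "a - \<eta> \<in> P" if "a \<in> S0" "0 < a" for a using sub that unfolding Pe_def by auto
    define A where "A = S0 - {T}"
    define B where "B = {s\<in>Q. s \<notin> S0 \<and> nx s \<in> S0}"
    define E where "E = {s\<in>Q. s \<notin> S0 \<and> nx s \<notin> S0}"
    have AQ: "A \<subseteq> Q" unfolding A_def Q_def using S0P by auto
    have Qeq: "Q = A \<union> B \<union> E" unfolding A_def B_def E_def using AQ S0P Q_def by auto
    have finA: "finite A" "finite B" "finite E" unfolding A_def B_def E_def using fS0 finQ by auto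
    have split: "psum T P rr = sum f A + sum f B + sum f E"
    proof -
      have "psum T P rr = sum f Q" unfolding psum_def f_def nx_def Q_def ..
      also have "\<dots> = sum f (A \<union> B) + sum f E" unfolding Qeq
        by (rule sum.union_disjoint) (use finA in \<open>auto simp: A_def B_def E_def\<close>)
      also have "sum f (A \<union> B) = sum f A + sum f B"
        by (rule sum.union_disjoint) (use finA in \<open>auto simp: A_def B_def\<close>)
      finally show ?thesis .
    qed
    have cardA: "card A \<le> m" unfolding A_def m_def using fS0 by (intro card_mono) auto
    have bdA: "norm (sum f A - sum JR A) \<le> real m * tol"
    proof -
      have "norm (sum f A - sum JR A) = norm (\<Sum>a\<in>A. f a - JR a)" by (simp add: sum_subtractf)
      also have "\<dots> \<le> (\<Sum>a\<in>A. norm (f a - JR a))" by (rule norm_sum)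
      also have "\<dots> \<le> (\<Sum>a\<in>A. tol)"
      proof (rule sum_mono)
        fix a assume aA: "a \<in> A"
        have a: "a \<in> S0" "a < T" using aA S0sub unfolding A_def by force+
        have aQ: "a \<in> Q" using aA AQ by auto
        have "nx a \<le> a + \<eta>" using nxQ(3)[OF aQ plusP[OF a]] \<eta> by simp
        then show "norm (f a - JR a) \<le> tol" unfolding f_def using etaR[OF a nxQ(2)[OF aQ]] by simp
      qed
      also have "\<dots> = real (card A) * tol" by simp
      also have "\<dots> \<le> real m * tol" using cardA tol by (intro mult_right_mono) auto
      finally show ?thesis .
    qed
    have Bprev: "nx s - \<eta> \<le> s" if sB: "s \<in> B" for s
    proof (rule ccontr)
      assume "\<not> nx s - \<eta> \<le> s"
      then have lt: "s < nx s - \<eta>" by simp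
      have sQ: "s \<in> Q" and a: "nx s \<in> S0" using sB unfolding B_def by auto
      have "0 < nx s" using nxQ(2,4)[OF sQ] by linarith
      then have "nx s \<le> nx s - \<eta>" using nxQ(3)[OF sQ minusP[OF a] lt] by simp
      then show False using \<eta> by simp
    qed
    have imgB: "nx ` B = S0 - {0}"
    proof
      show "nx ` B \<subseteq> S0 - {0}"
      proof
        fix a assume "a \<in> nx ` B"
        then obtain s where s: "s \<in> B" "a = nx s" by blast
        then have "s \<in> Q" "a \<in> S0" unfolding B_def by auto
        then show "a \<in> S0 - {0}" using nxQ(2,4)[of s] s by auto
      qed
      show "S0 - {0} \<subseteq> nx ` B"
      proof
        fix a assume a: "a \<in> S0 - {0}"
        then have a0: "0 < a" "a \<in> P" using S0sub S0P by force+
        obtain s where s: "s \<in> P - {T}" "s < a" "pnext P s = a" using partition_prev[OF P a0(2) a0(1)] by blast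
        have sQ: "s \<in> Q" using s unfolding Q_def by simp
        have nxs: "nx s = a" using s unfolding nx_def by simp
        have "s \<notin> S0"
        proof
          assume sS: "s \<in> S0"
          have g: "2 * \<eta> < a - s" using gap[OF sS _ s(2)] a by auto
          have "nx s \<le> a - \<eta>" using nxQ(3)[OF sQ minusP[of a]] a a0 g \<eta> by auto
          then show False using nxs \<eta> by simp
        qed
        then have "s \<in> B" unfolding B_def using sQ nxs a by auto
        then show "a \<in> nx ` B" using nxs by force
      qed
    qed
    have injB: "inj_on nx B"
      using pnext_inj[OF P] unfolding nx_def by (rule inj_on_subset) (auto simp: B_def Q_def)
    have cardB: "card B \<le> m"
    proof -
      have "card B = card (nx ` B)" using card_image[OF injB] by simp
      also have "\<dots> \<le> m" unfolding imgB m_def using fS0 by (intro card_mono) auto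
      finally show ?thesis .
    qed
    have bdB: "norm (sum f B - sum JL (S0 - {0})) \<le> real m * tol"
    proof -
      have "sum JL (S0 - {0}) = (\<Sum>s\<in>B. JL (nx s))"
        unfolding imgB[symmetric] using sum.reindex[OF injB, of JL] by simp
      then have "norm (sum f B - sum JL (S0 - {0})) = norm (\<Sum>s\<in>B. f s - JL (nx s))" by (simp add: sum_subtractf)
      also have "\<dots> \<le> (\<Sum>s\<in>B. norm (f s - JL (nx s)))" by (rule norm_sum)
      also have "\<dots> \<le> (\<Sum>s\<in>B. tol)"
      proof (rule sum_mono)
        fix s assume sB: "s \<in> B"
        have sQ: "s \<in> Q" and a: "nx s \<in> S0" using sB unfolding B_def by auto
        have "0 < nx s" using nxQ(2,4)[OF sQ] by linarith
        then show "norm (f s - JL (nx s)) \<le> tol"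
          unfolding f_def using etaL[OF a _ Bprev[OF sB] nxQ(2)[OF sQ]] by simp
      qed
      also have "\<dots> = real (card B) * tol" by simp
      also have "\<dots> \<le> real m * tol" using cardB tol by (intro mult_right_mono) auto
      finally show ?thesis .
    qed
    have nE: "norm (X (nx s) - X s) \<le> \<eta>0" if sE: "s \<in> E" for s
    proof -
      have sQ: "s \<in> Q" and sS: "s \<notin> S0" and tS: "nx s \<notin> S0" using sE unfolding E_def by auto
      define t where "t = nx s"
      have st: "0 \<le> s" "s < t" "t \<le> T" using nxQ(2,4,5)[OF sQ] unfolding t_def by auto
      have j1: "norm (X t - lleft X t) < \<delta>" using tS st unfolding t_def[symmetric] S0_def S1_def by auto
      have j2: "norm (lright X s - X s) < \<delta>" using sS st unfolding S0_def S2_def by auto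
      have "\<forall>z\<in>P1. z \<le> s \<or> t \<le> z"
      proof
        fix z assume "z \<in> P1"
        then have "z \<in> P" using P1P by auto
        then show "z \<le> s \<or> t \<le> z" using nxQ(3)[OF sQ, of z] unfolding t_def by force
      qed
      then have osc: "\<And>w w'. s < w \<Longrightarrow> w < t \<Longrightarrow> s < w' \<Longrightarrow> w' < t \<Longrightarrow> norm (X w - X w') < \<delta>"
        using KEY[OF st(1) st(3)] by blast
      have j3: "norm (lright X s - lleft X t) \<le> \<delta>" by (rule lim_close[OF st osc])
      have "norm (X t - X s) \<le> norm (X t - lleft X t) + norm (lleft X t - lright X s) + norm (lright X s - X s)"
        using norm_triangle_ineq[of "X t - lleft X t" "lleft X t - lright X s"]
          norm_triangle_ineq[of "X t - lleft X t + (lleft X t - lright X s)" "lright X s - X s"]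
        by (simp add: algebra_simps)
      also have "\<dots> \<le> \<delta> + \<delta> + \<delta>" using j1 j2 j3 by (simp add: norm_minus_commute)
      finally show ?thesis unfolding t_def \<delta>_def by simp
    qed
    have bdE: "norm (sum f E) < \<epsilon> / 4"
    proof -
      have "norm (sum f E) \<le> (\<Sum>s\<in>E. norm (f s))" by (rule norm_sum)
      also have "\<dots> \<le> (\<Sum>s\<in>E. KR * \<eta>0 powr \<theta> * norm (X (nx s) - X s) powr p)"
        unfolding f_def rr_def \<theta>_def by (intro sum_mono Rm_trade nE)
      also have "\<dots> = KR * \<eta>0 powr \<theta> * (\<Sum>s\<in>E. norm (X (nx s) - X s) powr p)" by (simp add: sum_distrib_left)
      also have "\<dots> \<le> KR * \<eta>0 powr \<theta> * (\<Sum>s\<in>Q. norm (X (nx s) - X s) powr p)"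
        using KR(1) by (intro mult_left_mono sum_mono2 finQ) (auto simp: E_def)
      also have "(\<Sum>s\<in>Q. norm (X (nx s) - X s) powr p) = psum T P (\<lambda>s t. norm (X t - X s) powr p)"
        unfolding psum_def Q_def nx_def ..
      also have "KR * \<eta>0 powr \<theta> * \<dots> \<le> KR * \<eta>0 powr \<theta> * C"
        using KR(1) by (intro mult_left_mono PV[OF P]) auto
      also have "\<dots> < \<epsilon> / 4" by (rule \<eta>0(2))
      finally show ?thesis .
    qed
    have tR: "norm (sum JR A - SR) < \<epsilon> / 8"
    proof -
      have "dist (sum JR A) SR < \<epsilon> / 8"
        using S4(3)[of A] finA S4(2) S0sub unfolding A_def S0_def by force
      then show ?thesis by (simp add: dist_norm)
    qed
    have tL: "norm (sum JL (S0 - {0}) - SL) < \<epsilon> / 8"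
    proof -
      have "dist (sum JL (S0 - {0})) SL < \<epsilon> / 8"
        using S3(3)[of "S0 - {0}"] fS0 S3(2) S0sub unfolding S0_def by force
      then show ?thesis by (simp add: dist_norm)
    qed
    have mt: "real m * tol + real m * tol < \<epsilon> / 4"
    proof -
      have "real m * tol = (\<epsilon> / 8) * (real m / (real m + 1))" unfolding tol_def by simp
      also have "\<dots> < (\<epsilon> / 8) * 1" using e by (intro mult_strict_left_mono frac_less1) auto
      finally show ?thesis by (simp add: mult.commute mult.left_commute)
    qed
    have "psum T P rr - (SL + SR) = (sum f A - sum JR A) + (sum f B - sum JL (S0 - {0})) + sum f E
        + (sum JR A - SR) + (sum JL (S0 - {0}) - SL)"
      unfolding split by (simp add: algebra_simps)
    also have "norm \<dots> \<le> norm (sum f A - sum JR A) + norm (sum f B - sum JL (S0 - {0})) + norm (sum f E)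
        + norm (sum JR A - SR) + norm (sum JL (S0 - {0}) - SL)"
      by (intro norm_triangle_le add_mono order_refl norm_triangle_ineq)
    also have "\<dots> < \<epsilon>" using bdA bdB bdE tR tL mt e by linarith
    finally show "norm (psum T P rr - (infsum (jump_left F D n X) {0<..T} + infsum (jump_right F D n X) {0..<T})) < \<epsilon>"
      unfolding SL_def SR_def JL_def JR_def .
  qed
qed

end

lemma rrs_unique:
  assumes T0: "0 < T" and l1: "rrs_lim T S K1" and l2: "rrs_lim T S K2"
  shows "K1 = K2"
proof (rule ccontr)
  assume ne: "K1 \<noteq> K2"
  define e where "e = norm (K1 - K2) / 2"
  have e: "e > 0" using ne unfolding e_def by simp
  obtain P1 where P1: "is_partition T P1" "\<And>P. is_partition T P \<and> P1 \<subseteq> P \<Longrightarrow> norm (S P - K1) < e"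
    using l1 e unfolding rrs_lim_def by blast
  obtain P2 where P2: "is_partition T P2" "\<And>P. is_partition T P \<and> P2 \<subseteq> P \<Longrightarrow> norm (S P - K2) < e"
    using l2 e unfolding rrs_lim_def by blast
  have P: "is_partition T (P1 \<union> P2)" using P1(1) P2(1) unfolding is_partition_def by auto
  have a: "norm (S (P1 \<union> P2) - K1) < e" using P1(2)[of "P1 \<union> P2"] P by auto
  have b: "norm (S (P1 \<union> P2) - K2) < e" using P2(2)[of "P1 \<union> P2"] P by auto
  have "norm (K1 - K2) \<le> norm (S (P1 \<union> P2) - K1) + norm (S (P1 \<union> P2) - K2)"
    using norm_triangle_ineq4[of "S (P1 \<union> P2) - K2" "S (P1 \<union> P2) - K1"] by (simp add: norm_minus_commute)
  also have "\<dots> < 2 * e" using a b by simp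
  finally show False unfolding e_def by simp
qed

lemma rrs_integral_eq:
  assumes "0 < T" "rrs_lim T S K"
  shows "rrs_integral T S = K"
  unfolding rrs_integral_def using assms rrs_unique by blast

context itoF begin

lemma main_lim:
  "rrs_lim T (rough_sum D n T X)
     (F (X T) - F (X 0) - (infsum (jump_left F D n X) {0<..T} + infsum (jump_right F D n X) {0..<T}))"
  unfolding rrs_lim_def
proof (intro allI impI)
  fix e :: real assume e: "e > 0"
  obtain Pe where Pe: "is_partition T Pe" "\<And>P. is_partition T P \<and> Pe \<subseteq> P \<Longrightarrow>
     norm (psum T P rr - (infsum (jump_left F D n X) {0<..T} + infsum (jump_right F D n X) {0..<T})) < e"
    using conv[OF e] by blast
  show "\<exists>Pe. is_partition T Pe \<and> (\<forall>P. is_partition T P \<and> Pe \<subseteq> P \<longrightarrow> norm (rough_sum D n T X P -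
     (F (X T) - F (X 0) - (infsum (jump_left F D n X) {0<..T} + infsum (jump_right F D n X) {0..<T}))) < e)"
  proof (intro exI[of _ Pe] conjI allI impI Pe(1))
    fix P assume P: "is_partition T P \<and> Pe \<subseteq> P"
    have "rough_sum D n T X P - (F (X T) - F (X 0) - (infsum (jump_left F D n X) {0<..T} + infsum (jump_right F D n X) {0..<T}))
       = - (psum T P rr - (infsum (jump_left F D n X) {0<..T} + infsum (jump_right F D n X) {0..<T}))"
      using rough_eq[of P] P by (simp add: algebra_simps)
    then show "norm (rough_sum D n T X P - (F (X T) - F (X 0) - (infsum (jump_left F D n X) {0<..T} + infsum (jump_right F D n X) {0..<T}))) < e"
      using Pe(2)[OF P] by (simp only: norm_minus_cancel)
  qed
qed

lemma JR_zero:
  assumes "0 \<le> t" "t < T" "(X \<longlongrightarrow> X t) (at_right t)"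
  shows "jump_right F D n X t = 0"
proof -
  have "lright X t = X t" unfolding lright_def by (rule tendsto_Lim[OF trivial_limit_at_right_real assms(3)])
  then show ?thesis unfolding JR_eq using Rm_self[OF ck] by simp
qed

lemma JL_zero:
  assumes "0 < t" "t \<le> T" "(X \<longlongrightarrow> X t) (at_left t)"
  shows "jump_left F D n X t = 0"
proof -
  have "lleft X t = X t" unfolding lleft_def by (rule tendsto_Lim[OF trivial_limit_at_left_real assms(3)])
  then show ?thesis unfolding JL_eq using Rm_self[OF ck] by simp
qed

end

theorem theorem3p2:
  fixes p T :: real and X :: "real \<Rightarrow> 'v::banach" and F :: "'v \<Rightarrow> 'u::banach"
    and D :: "nat \<Rightarrow> 'v \<Rightarrow> 'v list \<Rightarrow> 'u" and n :: nat
  assumes "p \<ge> 1" and "n = nat \<lfloor>p\<rfloor>" and "0 < T"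
    and "finite_pvar p T X"
    and "Ckb (Suc n) F D"
  shows "(\<exists>K. rrs_lim T (rough_sum D n T X) K)
       \<and> countable {t\<in>{0<..T}. jump_left F D n X t \<noteq> 0}
       \<and> countable {t\<in>{0..<T}. jump_right F D n X t \<noteq> 0}
       \<and> (\<lambda>t. norm (jump_left F D n X t)) summable_on {0<..T}
       \<and> (\<lambda>t. norm (jump_right F D n X t)) summable_on {0..<T}
       \<and> F (X T) - F (X 0) = rrs_integral T (rough_sum D n T X)
            + infsum (jump_left F D n X) {0<..T} + infsum (jump_right F D n X) {0..<T}
       \<and> (cadlag_on T X \<longrightarrow>
           F (X T) - F (X 0) = rrs_integral T (rough_sum D n T X) + infsum (jump_left F D n X) {0<..T})
       \<and> (continuous_on {0..T} X \<longrightarrow> F (X T) - F (X 0) = rrs_integral T (rough_sum D n T X))"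
proof -
  obtain C where C: "\<And>P. is_partition T P \<Longrightarrow> psum T P (\<lambda>s t. norm (X t - X s) powr p) \<le> C"
    using assms(4) unfolding finite_pvar_def by blast
  have np: "p < real (Suc n)"
  proof -
    have "real n = of_int \<lfloor>p\<rfloor>" using assms(1,2) by simp
    then show ?thesis by linarith
  qed
  interpret itoF p T C X F D n
    by unfold_locales (use assms(1,3,5) C np in auto)
  define SL where "SL = infsum (jump_left F D n X) {0<..T}"
  define SR where "SR = infsum (jump_right F D n X) {0..<T}"
  have lim: "rrs_lim T (rough_sum D n T X) (F (X T) - F (X 0) - (SL + SR))"
    using main_lim unfolding SL_def SR_def .
  have int: "rrs_integral T (rough_sum D n T X) = F (X T) - F (X 0) - (SL + SR)"
    by (rule rrs_integral_eq[OF assms(3) lim])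
  have main: "F (X T) - F (X 0) = rrs_integral T (rough_sum D n T X) + SL + SR"
    unfolding int by (simp add: algebra_simps)
  have cad: "F (X T) - F (X 0) = rrs_integral T (rough_sum D n T X) + SL" if cd: "cadlag_on T X"
  proof -
    have "SR = 0" unfolding SR_def
    proof (rule infsum_0)
      fix t assume "t \<in> {0..<T}"
      then show "jump_right F D n X t = 0" using cd unfolding cadlag_on_def by (intro JR_zero) auto
    qed
    then show ?thesis using main by simp
  qed
  have cont: "F (X T) - F (X 0) = rrs_integral T (rough_sum D n T X)" if cX: "continuous_on {0..T} X"
  proof -
    have "SR = 0" unfolding SR_def
    proof (rule infsum_0)
      fix t assume t: "t \<in> {0..<T}"
      have "(X \<longlongrightarrow> X t) (at t within {0..T})" using cX t unfolding continuous_on_def by auto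
      then have "(X \<longlongrightarrow> X t) (at t within {t..T})" by (rule tendsto_within_subset) (use t in auto)
      then have "(X \<longlongrightarrow> X t) (at_right t)" using t by (simp add: at_within_Icc_at_right)
      then show "jump_right F D n X t = 0" using t by (intro JR_zero) auto
    qed
    moreover have "SL = 0" unfolding SL_def
    proof (rule infsum_0)
      fix t assume t: "t \<in> {0<..T}"
      have "(X \<longlongrightarrow> X t) (at t within {0..T})" using cX t unfolding continuous_on_def by auto
      then have "(X \<longlongrightarrow> X t) (at t within {0..t})" by (rule tendsto_within_subset) (use t in auto)
      then have "(X \<longlongrightarrow> X t) (at_left t)" using t by (simp add: at_within_Icc_at_left)
      then show "jump_left F D n X t = 0" using t by (intro JL_zero) auto
    qed
    ultimately show ?thesis using main by simp
  qed
  show ?thesis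
    using lim JL_countable JR_countable JL_summable JR_summable main cad cont
    unfolding SL_def SR_def by blast
qed

end
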